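(* Let $k\geq1$ and $S=sgp^+\langle a,b\mid a^kb=b\rangle$. Then $S$ is prefix-automatic but not biautomatic.
   Context: $sgp^+\langle A\mid R\rangle$ is the free semigroup $A^+$ (nonempty words) modulo the congruence generated by $R$; $A^*$ is the free monoid with empty word $\varepsilon$. Automaticity: regular = accepted by a finite automaton. With $\$\notin A$, $A(2,\$)=(A\cup\{\$\})^2\setminus\{(\$,\$)\}$; $(\alpha,\beta)\delta_A^R$ (resp. $\delta_A^L$) is the word over $A(2,\$)$ obtained by padding the shorter word on the right (resp. left) with $\$$'s and reading letter pairs. For a semigroup $S$ generated by a finite set $A$, $\phi:A^+\to S$ canonical, $L\subseteq A^+$ regular with $\phi(L)=S$, write $\alpha=\beta$ if $\phi(\alpha)=\phi(\beta)$, and for $a\in A\cup\{\varepsilon\}$: $L_a^\$=\{(\alpha,\beta)\delta^R_A:\alpha a=\beta\}$, ${}^\$L_a=\{(\alpha,\beta)\delta^L_A:\alpha a=\beta\}$, ${}_aL^\$=\{(\alpha,\beta)\delta^R_A:a\alpha=\beta\}$, ${}^\$_aL=\{(\alpha,\beta)\delta^L_A:a\alpha=\beta\}$ (with $\alpha,\beta\in L$). $S$ is automatic if some such $(A,L)$ (for some finite generating set $A$) has all $L_a^\$$ regular; biautomatic if some $(A,L)$ has all four families regular; prefix-automatic if some automatic structure $(A,L)$ also has $\{(\alpha,\beta)\delta_A^R:\alpha\in L,\beta\in\mathrm{Pref}(L),\alpha=\beta\}$ regular ($\mathrm{Pref}(L)$ = prefixes of words of $L$). *)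

theory Defs
  imports Main
begin

definition regular :: "'c list set \<Rightarrow> bool" where
  "regular L \<longleftrightarrow> (\<exists>(N::nat) (\<delta>::nat \<Rightarrow> 'c \<Rightarrow> nat) q0 (F::nat set).
      q0 < N \<and> (\<forall>q<N. \<forall>c. \<delta> q c < N) \<and> L = {w. foldl \<delta> q0 w \<in> F})"

definition padR :: "'a list \<Rightarrow> 'a list \<Rightarrow> ('a option \<times> 'a option) list" where
  "padR u v = (let n = max (length u) (length v) in
     zip (map Some u @ replicate (n - length u) None)
         (map Some v @ replicate (n - length v) None))"

definition padL :: "'a list \<Rightarrow> 'a list \<Rightarrow> ('a option \<times> 'a option) list" where
  "padL u v = (let n = max (length u) (length v) in
     zip (replicate (n - length u) None @ map Some u)
         (replicate (n - length v) None @ map Some v))"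

fun evalw :: "('s \<Rightarrow> 's \<Rightarrow> 's) \<Rightarrow> 's list \<Rightarrow> 's" where
  "evalw m [] = undefined"
| "evalw m (x # xs) = foldl m x xs"

text \<open>Right / left multiplication by a generator or by the empty word (None).\<close>
definition rmul :: "('s \<Rightarrow> 's \<Rightarrow> 's) \<Rightarrow> 's \<Rightarrow> 's option \<Rightarrow> 's" where
  "rmul m x a = (case a of None \<Rightarrow> x | Some y \<Rightarrow> m x y)"

definition lmul :: "('s \<Rightarrow> 's \<Rightarrow> 's) \<Rightarrow> 's option \<Rightarrow> 's \<Rightarrow> 's" where
  "lmul m a x = (case a of None \<Rightarrow> x | Some y \<Rightarrow> m y x)"

definition gen_lang :: "'s set \<Rightarrow> ('s \<Rightarrow> 's \<Rightarrow> 's) \<Rightarrow> 's set \<Rightarrow> 's list set \<Rightarrow> bool" where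
  "gen_lang Sc m A L \<longleftrightarrow> finite A \<and> A \<subseteq> Sc \<and>
     (\<forall>w\<in>L. w \<noteq> [] \<and> set w \<subseteq> A) \<and> regular L \<and> evalw m ` L = Sc"

definition LR :: "('s \<Rightarrow> 's \<Rightarrow> 's) \<Rightarrow> 's list set \<Rightarrow> 's option \<Rightarrow> ('s option \<times> 's option) list set" where
  "LR m L a = {padR u v | u v. u \<in> L \<and> v \<in> L \<and> rmul m (evalw m u) a = evalw m v}"

definition LL :: "('s \<Rightarrow> 's \<Rightarrow> 's) \<Rightarrow> 's list set \<Rightarrow> 's option \<Rightarrow> ('s option \<times> 's option) list set" where
  "LL m L a = {padL u v | u v. u \<in> L \<and> v \<in> L \<and> rmul m (evalw m u) a = evalw m v}"

definition RR :: "('s \<Rightarrow> 's \<Rightarrow> 's) \<Rightarrow> 's list set \<Rightarrow> 's option \<Rightarrow> ('s option \<times> 's option) list set" where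
  "RR m L a = {padR u v | u v. u \<in> L \<and> v \<in> L \<and> lmul m a (evalw m u) = evalw m v}"

definition RL :: "('s \<Rightarrow> 's \<Rightarrow> 's) \<Rightarrow> 's list set \<Rightarrow> 's option \<Rightarrow> ('s option \<times> 's option) list set" where
  "RL m L a = {padL u v | u v. u \<in> L \<and> v \<in> L \<and> lmul m a (evalw m u) = evalw m v}"

definition automatic_structure :: "'s set \<Rightarrow> ('s \<Rightarrow> 's \<Rightarrow> 's) \<Rightarrow> 's set \<Rightarrow> 's list set \<Rightarrow> bool" where
  "automatic_structure Sc m A L \<longleftrightarrow> gen_lang Sc m A L \<and>
     (\<forall>a\<in>insert None (Some ` A). regular (LR m L a))"

definition automatic :: "'s set \<Rightarrow> ('s \<Rightarrow> 's \<Rightarrow> 's) \<Rightarrow> bool" where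
  "automatic Sc m \<longleftrightarrow> (\<exists>A L. automatic_structure Sc m A L)"

definition biautomatic :: "'s set \<Rightarrow> ('s \<Rightarrow> 's \<Rightarrow> 's) \<Rightarrow> bool" where
  "biautomatic Sc m \<longleftrightarrow> (\<exists>A L. gen_lang Sc m A L \<and>
     (\<forall>a\<in>insert None (Some ` A).
        regular (LR m L a) \<and> regular (LL m L a) \<and> regular (RR m L a) \<and> regular (RL m L a)))"

text \<open>Prefixes of words of L; only nonempty prefixes can represent semigroup elements.\<close>
definition Pref :: "'a list set \<Rightarrow> 'a list set" where
  "Pref L = {p. \<exists>w\<in>L. \<exists>s. w = p @ s}"

definition prefix_automatic :: "'s set \<Rightarrow> ('s \<Rightarrow> 's \<Rightarrow> 's) \<Rightarrow> bool" where
  "prefix_automatic Sc m \<longleftrightarrow> (\<exists>A L. automatic_structure Sc m A L \<and>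
     regular {padR u v | u v. u \<in> L \<and> v \<in> Pref L \<and> v \<noteq> [] \<and> evalw m u = evalw m v})"

inductive_set pres_cong :: "('g list \<times> 'g list) set \<Rightarrow> ('g list \<times> 'g list) set"
  for R where
  gen: "(u, v) \<in> R \<Longrightarrow> (u, v) \<in> pres_cong R"
| refl: "w \<noteq> [] \<Longrightarrow> (w, w) \<in> pres_cong R"
| sym: "(u, v) \<in> pres_cong R \<Longrightarrow> (v, u) \<in> pres_cong R"
| trans: "(u, v) \<in> pres_cong R \<Longrightarrow> (v, w) \<in> pres_cong R \<Longrightarrow> (u, w) \<in> pres_cong R"
| ctx: "(u, v) \<in> pres_cong R \<Longrightarrow> (p @ u @ q, p @ v @ q) \<in> pres_cong R"

definition sgp_carrier :: "('g list \<times> 'g list) set \<Rightarrow> 'g list set set" where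
  "sgp_carrier R = {pres_cong R `` {w} | w. w \<noteq> []}"

definition sgp_mult :: "('g list \<times> 'g list) set \<Rightarrow> 'g list set \<Rightarrow> 'g list set \<Rightarrow> 'g list set" where
  "sgp_mult R X Y = pres_cong R `` {(SOME x. x \<in> X) @ (SOME y. y \<in> Y)}"

text \<open>The relation a^k b = b over generators a = True, b = False.\<close>
definition rel_akb :: "nat \<Rightarrow> (bool list \<times> bool list) set" where
  "rel_akb k = {(replicate k True @ [False], [False])}"

end

theory Submission
  imports Defs
begin


abbreviation PC :: "nat \<Rightarrow> (bool list \<times> bool list) set" where
  "PC k \<equiv> pres_cong (rel_akb k)"

definition cls :: "nat \<Rightarrow> bool list \<Rightarrow> bool list set" where
  "cls k w = PC k `` {w}"

definition rep :: "'a set \<Rightarrow> 'a" where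
  "rep X = (SOME x. x \<in> X)"

lemma pc_ne: "(u, v) \<in> pres_cong (rel_akb k) \<Longrightarrow> u \<noteq> [] \<and> v \<noteq> []"
  by (induction rule: pres_cong.induct) (auto simp: rel_akb_def)

lemma pc_refl: "w \<noteq> [] \<Longrightarrow> (w, w) \<in> PC k"
  by (rule pres_cong.refl)

lemma pc_sym: "(u, v) \<in> PC k \<Longrightarrow> (v, u) \<in> PC k"
  by (rule pres_cong.sym)

lemma pc_trans: "(u, v) \<in> PC k \<Longrightarrow> (v, w) \<in> PC k \<Longrightarrow> (u, w) \<in> PC k"
  by (rule pres_cong.trans)

lemma pc_ctx: "(u, v) \<in> PC k \<Longrightarrow> (p @ u @ q, p @ v @ q) \<in> PC k"
  by (rule pres_cong.ctx)

lemma pc_app: "(u, u') \<in> PC k \<Longrightarrow> (v, v') \<in> PC k \<Longrightarrow> (u @ v, u' @ v') \<in> PC k"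
proof -
  assume a: "(u, u') \<in> PC k" and b: "(v, v') \<in> PC k"
  have 1: "(u @ v, u' @ v) \<in> PC k" using pc_ctx[OF a, of "[]" v] by simp
  have 2: "(u' @ v, u' @ v') \<in> PC k" using pc_ctx[OF b, of u' "[]"] by simp
  show ?thesis by (rule pc_trans[OF 1 2])
qed

lemma cls_mem: "w \<noteq> [] \<Longrightarrow> w \<in> cls k w"
  by (simp add: cls_def pc_refl)

lemma cls_eq_iff: "u \<noteq> [] \<Longrightarrow> cls k u = cls k v \<longleftrightarrow> (u, v) \<in> PC k"
proof
  assume "u \<noteq> []" "cls k u = cls k v"
  then show "(u, v) \<in> PC k"
  proof -
    assume "cls k u = cls k v"
    have "v \<in> cls k u \<or> v = []" proof (cases "v = []")
      case False then have "v \<in> cls k v" by (rule cls_mem)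
      then show ?thesis using \<open>cls k u = cls k v\<close> by simp
    qed simp
    moreover have "v \<noteq> []"
    proof
      assume "v = []"
      have "u \<in> cls k u" by (rule cls_mem[OF \<open>u \<noteq> []\<close>])
      then have "u \<in> cls k v" using \<open>cls k u = cls k v\<close> by simp
      then show False using \<open>v = []\<close> pc_ne by (auto simp: cls_def)
    qed
    ultimately show ?thesis by (simp add: cls_def)
  qed
next
  assume "(u, v) \<in> PC k"
  then show "cls k u = cls k v"
  proof -
    assume uv: "(u, v) \<in> PC k"
    have "(u, x) \<in> PC k \<longleftrightarrow> (v, x) \<in> PC k" for x
      using pc_trans[OF uv, of x] pc_trans[OF pc_sym[OF uv], of x] by blast
    then show ?thesis unfolding cls_def by auto
  qed
qed

lemma carrier_cls: "X \<in> sgp_carrier (rel_akb k) \<longleftrightarrow> (\<exists>w. w \<noteq> [] \<and> X = cls k w)"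
  by (auto simp: sgp_carrier_def cls_def)

lemma rep_cls: "w \<noteq> [] \<Longrightarrow> (w, rep (cls k w)) \<in> PC k"
proof -
  assume "w \<noteq> []"
  then have "w \<in> cls k w" by (rule cls_mem)
  then have "rep (cls k w) \<in> cls k w" unfolding rep_def by (rule someI)
  then show ?thesis by (simp add: cls_def)
qed

lemma carrier_rep: "X \<in> sgp_carrier (rel_akb k) \<Longrightarrow> rep X \<noteq> [] \<and> cls k (rep X) = X"
proof -
  assume "X \<in> sgp_carrier (rel_akb k)"
  then obtain w where w: "w \<noteq> []" "X = cls k w" unfolding carrier_cls by blast
  have r: "(w, rep X) \<in> PC k" using rep_cls[OF w(1), of k] unfolding w(2)[symmetric] .
  then have 1: "rep X \<noteq> []" using pc_ne[OF r] by simp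
  have "cls k w = cls k (rep X)" using cls_eq_iff[OF w(1)] r by simp
  then have "cls k (rep X) = X" using w(2) by simp
  with 1 show ?thesis by simp
qed

lemma mult_cls: "u \<noteq> [] \<Longrightarrow> v \<noteq> [] \<Longrightarrow> sgp_mult (rel_akb k) (cls k u) (cls k v) = cls k (u @ v)"
proof -
  assume u: "u \<noteq> []" and v: "v \<noteq> []"
  have "sgp_mult (rel_akb k) (cls k u) (cls k v) = cls k (rep (cls k u) @ rep (cls k v))"
    by (simp add: sgp_mult_def cls_def rep_def)
  also have "\<dots> = cls k (u @ v)"
  proof -
    have "(u @ v, rep (cls k u) @ rep (cls k v)) \<in> PC k"
      using pc_app[OF rep_cls[OF u] rep_cls[OF v]] .
    moreover have ne: "u @ v \<noteq> []" using u by simp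
    ultimately have "cls k (u @ v) = cls k (rep (cls k u) @ rep (cls k v))"
      using cls_eq_iff[OF ne] by simp
    then show ?thesis by (rule HOL.sym)
  qed
  finally show ?thesis .
qed

lemma evalw_snoc: "xs \<noteq> [] \<Longrightarrow> evalw m (xs @ [y]) = m (evalw m xs) y"
  by (cases xs) auto

lemma evalw_carrier:
  assumes "xs \<noteq> []" "set xs \<subseteq> sgp_carrier (rel_akb k)"
  shows "evalw (sgp_mult (rel_akb k)) xs = cls k (concat (map rep xs))"
  using assms
proof (induction xs rule: rev_induct)
  case Nil then show ?case by simp
next
  case (snoc y xs)
  have y: "rep y \<noteq> []" "cls k (rep y) = y" using carrier_rep snoc.prems by auto
  show ?case
  proof (cases "xs = []")
    case True then show ?thesis using y by simp
  next
    case False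
    have ih: "evalw (sgp_mult (rel_akb k)) xs = cls k (concat (map rep xs))"
      using snoc False by auto
    obtain x xs' where xs: "xs = x # xs'" using False by (cases xs) auto
    have "x \<in> sgp_carrier (rel_akb k)" using snoc.prems xs by simp
    then have "rep x \<noteq> []" using carrier_rep by blast
    then have ne: "concat (map rep xs) \<noteq> []" using xs by simp
    have "evalw (sgp_mult (rel_akb k)) (xs @ [y]) = sgp_mult (rel_akb k) (cls k (concat (map rep xs))) (cls k (rep y))"
      using evalw_snoc[OF False] ih y(2) by simp
    also have "\<dots> = cls k (concat (map rep xs) @ rep y)" using mult_cls[OF ne y(1)] .
    finally show ?thesis by (simp only: map_append concat_append list.map concat.simps append_Nil2)
  qed
qed


section \<open>Invariants\<close>

definition bc :: "bool list \<Rightarrow> nat" where "bc w = length (filter Not w)"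

definition run :: "nat \<Rightarrow> bool list \<Rightarrow> nat" where
  "run acc w = foldl (\<lambda>c x. if x then Suc c else 0) acc w"

lemma bc_append[simp]: "bc (u @ v) = bc u + bc v" by (simp add: bc_def)
lemma bc_simps[simp]: "bc [] = 0" "bc (True # w) = bc w" "bc (False # w) = Suc (bc w)"
  by (simp_all add: bc_def)
lemma bc_replicate[simp]: "bc (replicate n True) = 0" "bc (replicate n False) = n"
  by (induct n) auto
lemma bc_zero_iff: "bc w = 0 \<longleftrightarrow> False \<notin> set w"
  by (induct w) (auto simp: bc_def)

lemma run_append[simp]: "run acc (u @ v) = run (run acc u) v" by (simp add: run_def)
lemma run_simps[simp]: "run acc [] = acc" "run acc (True # w) = run (Suc acc) w"
  "run acc (False # w) = run 0 w"
  by (simp_all add: run_def)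
lemma run_replicate[simp]: "run acc (replicate n True) = acc + n"
  by (induct n arbitrary: acc) auto
lemma run_replicateF0[simp]: "run 0 (replicate n False) = 0"
  by (induct n) auto
lemma run_replicateF[simp]: "n > 0 \<Longrightarrow> run acc (replicate n False) = 0"
  by (cases n) auto
lemma run_le: "run acc w \<le> acc + length w"
proof (induct w arbitrary: acc)
  case Nil then show ?case by simp
next
  case (Cons a w)
  show ?case
  proof (cases a)
    case True
    have "run (Suc acc) w \<le> Suc acc + length w" by (rule Cons.hyps)
    then show ?thesis using True by simp
  next
    case False
    have "run 0 w \<le> 0 + length w" by (rule Cons.hyps)
    then show ?thesis using False by simp
  qed
qed

lemma run_le_F: "False \<in> set w \<Longrightarrow> run acc w \<le> length w"
proof (induct w arbitrary: acc)
  case Nil then show ?case by simp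
next
  case (Cons a w)
  show ?case
  proof (cases a)
    case True
    then have "False \<in> set w" using Cons.prems by simp
    then have "run (Suc acc) w \<le> length w" by (rule Cons.hyps)
    then show ?thesis using True by simp
  next
    case False
    have "run 0 w \<le> 0 + length w" by (rule run_le)
    then show ?thesis using False by simp
  qed
qed

lemma pc_inv: "(u, v) \<in> PC k \<Longrightarrow> bc u = bc v \<and> (\<forall>acc. run acc u = run acc v)"
proof (induction rule: pres_cong.induct)
  case (gen u v) then show ?case by (auto simp: rel_akb_def)
next
  case (refl w) then show ?case by simp
next
  case (sym u v) then show ?case by simp
next
  case (trans u v w) then show ?case by metis
next
  case (ctx u v p q) then show ?case by (simp only: bc_append run_append) simp
qed


section \<open>Normal forms\<close>

fun nfa :: "nat \<Rightarrow> nat \<Rightarrow> bool list \<Rightarrow> bool list" where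
  "nfa k acc [] = replicate acc True"
| "nfa k acc (x # w) = (if x then nfa k (Suc acc) w else replicate (acc mod k) True @ False # nfa k 0 w)"

fun nfp :: "nat \<Rightarrow> nat \<Rightarrow> bool list \<Rightarrow> bool" where
  "nfp k acc [] = True"
| "nfp k acc (x # w) = (if x then nfp k (Suc acc) w else acc < k \<and> nfp k 0 w)"

lemma nfa_repl: "nfa k acc (replicate j True @ z) = nfa k (acc + j) z"
  by (induct j arbitrary: acc) auto

lemma nfp_repl: "nfp k acc (replicate j True @ z) = nfp k (acc + j) z"
  by (induct j arbitrary: acc) auto

lemma nfa_ctx:
  assumes "\<And>acc q. nfa k acc (u @ q) = nfa k acc (v @ q)"
  shows "nfa k acc (p @ u @ q) = nfa k acc (p @ v @ q)"
proof (induct p arbitrary: acc)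
  case Nil then show ?case using assms by simp
next
  case (Cons x p) then show ?case by simp
qed

lemma pc_nfa: "(u, v) \<in> PC k \<Longrightarrow> \<forall>acc q. nfa k acc (u @ q) = nfa k acc (v @ q)"
proof (induction rule: pres_cong.induct)
  case (gen u v)
  then have u: "u = replicate k True @ [False]" and v: "v = [False]" by (auto simp: rel_akb_def)
  show ?case
  proof (intro allI)
    fix acc q
    have "nfa k acc (u @ q) = nfa k acc (replicate k True @ False # q)" using u by simp
    also have "\<dots> = nfa k (acc + k) (False # q)" by (rule nfa_repl)
    also have "\<dots> = nfa k acc (v @ q)" using v by simp
    finally show "nfa k acc (u @ q) = nfa k acc (v @ q)" .
  qed
next
  case (refl w) then show ?case by simp
next
  case (sym u v) then show ?case by simp
next
  case (trans u v w) then show ?case by metis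
next
  case (ctx u v p q)
  show ?case
  proof (intro allI)
    fix acc q'
    have "nfa k acc (p @ u @ (q @ q')) = nfa k acc (p @ v @ (q @ q'))"
      using ctx.IH by (intro nfa_ctx) blast
    then show "nfa k acc ((p @ u @ q) @ q') = nfa k acc ((p @ v @ q) @ q')" by simp
  qed
qed

lemma nfp_nfa: "nfp k acc w \<Longrightarrow> nfa k acc w = replicate acc True @ w"
proof (induct w arbitrary: acc)
  case Nil then show ?case by simp
next
  case (Cons x w)
  show ?case
  proof (cases x)
    case True
    then have "nfa k (Suc acc) w = replicate (Suc acc) True @ w" using Cons by simp
    then show ?thesis using True by (simp add: replicate_app_Cons_same)
  next
    case False
    then have "acc < k" "nfp k 0 w" using Cons.prems by auto
    then show ?thesis using False Cons.hyps[of 0] by simp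
  qed
qed

lemma nfp_append: "nfp k acc (w @ z) = (nfp k acc w \<and> nfp k (run acc w) z)"
proof (induct w arbitrary: acc)
  case Nil then show ?case by simp
next
  case (Cons x w) then show ?case by (cases x) auto
qed

lemma nfp_of_nfa: "k \<ge> 1 \<Longrightarrow> nfp k 0 (nfa k acc w)"
proof (induct w arbitrary: acc)
  case Nil then show ?case using nfp_repl[of k 0 acc "[]"] by simp
next
  case (Cons x w)
  show ?case
  proof (cases x)
    case True then show ?thesis using Cons by simp
  next
    case False
    have "nfp k 0 (replicate (acc mod k) True @ False # nfa k 0 w) = nfp k (acc mod k) (False # nfa k 0 w)"
      using nfp_repl[of k 0] by simp
    also have "\<dots> = True" using Cons False by simp
    finally show ?thesis using False by simp
  qed
qed

lemma nfa_ne: "acc > 0 \<or> w \<noteq> [] \<Longrightarrow> nfa k acc w \<noteq> []"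
  by (induct w arbitrary: acc) auto

lemma pc_repl_mod: "(replicate (k * j + r) True @ [False], replicate r True @ [False]) \<in> PC k"
proof (induct j)
  case 0 then show ?case by (simp add: pc_refl)
next
  case (Suc j)
  have g: "(replicate k True @ [False], [False]) \<in> PC k" by (rule pres_cong.gen) (simp add: rel_akb_def)
  have e: "replicate (k * Suc j + r) True @ [False] = replicate (k * j + r) True @ (replicate k True @ [False]) @ []"
  proof -
    have "k * Suc j + r = (k * j + r) + k" by simp
    then show ?thesis by (simp only: replicate_add) simp
  qed
  have "(replicate (k * Suc j + r) True @ [False], replicate (k * j + r) True @ [False] @ []) \<in> PC k"
    unfolding e by (rule pc_ctx[OF g])
  then have "(replicate (k * Suc j + r) True @ [False], replicate (k * j + r) True @ [False]) \<in> PC k" by simp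
  then show ?case using Suc pc_trans by blast
qed

lemma pc_repl_modk: "(replicate acc True @ [False], replicate (acc mod k) True @ [False]) \<in> PC k"
proof -
  have "acc = k * (acc div k) + acc mod k" by simp
  then show ?thesis using pc_repl_mod[of k "acc div k" "acc mod k"] by metis
qed

lemma nfa_rel: "replicate acc True @ w \<noteq> [] \<Longrightarrow> (replicate acc True @ w, nfa k acc w) \<in> PC k"
proof (induct w arbitrary: acc)
  case Nil then show ?case by (simp add: pc_refl)
next
  case (Cons x w)
  show ?case
  proof (cases x)
    case True
    have "(replicate (Suc acc) True @ w, nfa k (Suc acc) w) \<in> PC k" by (rule Cons.hyps) simp
    then show ?thesis using True by (simp add: replicate_app_Cons_same)
  next
    case False
    show ?thesis
    proof (cases "w = []")
      case True
      then show ?thesis using False pc_repl_modk[of acc k] by simp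
    next
      case wne: False
      have "(w, nfa k 0 w) \<in> PC k" using Cons.hyps[of 0] wne by simp
      then have "((replicate acc True @ [False]) @ w, (replicate (acc mod k) True @ [False]) @ nfa k 0 w) \<in> PC k"
        by (rule pc_app[OF pc_repl_modk])
      then show ?thesis using False by simp
    qed
  qed
qed

lemma nf_rel: "w \<noteq> [] \<Longrightarrow> (w, nfa k 0 w) \<in> PC k"
  using nfa_rel[of 0 w k] by simp

lemma nf_unique: "nfp k 0 u \<Longrightarrow> nfp k 0 v \<Longrightarrow> (u, v) \<in> PC k \<Longrightarrow> u = v"
proof -
  assume u: "nfp k 0 u" and v: "nfp k 0 v" and uv: "(u, v) \<in> PC k"
  have "nfa k 0 (u @ []) = nfa k 0 (v @ [])" using pc_nfa[OF uv] by blast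
  then show "u = v" using nfp_nfa[OF u] nfp_nfa[OF v] by simp
qed



section \<open>Regularity toolkit\<close>

lemma regularI:
  fixes \<delta> :: "'q \<Rightarrow> 'c \<Rightarrow> 'q"
  assumes fin: "finite Q" and q0: "q0 \<in> Q" and cl: "\<And>q c. q \<in> Q \<Longrightarrow> \<delta> q c \<in> Q"
  shows "regular {w. foldl \<delta> q0 w \<in> F}"
proof -
  obtain h where h: "bij_betw h {0..<card Q} Q" using ex_bij_betw_nat_finite[OF fin] by blast
  define N where "N = card Q"
  define g where "g = inv_into {0..<N} h"
  define \<delta>' where "\<delta>' i c = (if i < N then g (\<delta> (h i) c) else 0)" for i c
  have hQ: "i < N \<Longrightarrow> h i \<in> Q" for i using h unfolding N_def bij_betw_def by auto
  have gQ: "q \<in> Q \<Longrightarrow> g q < N \<and> h (g q) = q" for q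
  proof -
    assume "q \<in> Q"
    then have "q \<in> h ` {0..<N}" using h unfolding N_def bij_betw_def by auto
    then obtain x where x: "x < N" "q = h x" by auto
    have "inj_on h {0..<N}" using h unfolding N_def bij_betw_def by auto
    then have "g q = x" unfolding g_def x(2) using x(1) by (simp add: inv_into_f_f)
    then show ?thesis using x by simp
  qed
  have N0: "0 < N" using q0 fin unfolding N_def by (auto simp: card_gt_0_iff)
  have inv: "i < N \<Longrightarrow> foldl \<delta>' i w < N \<and> h (foldl \<delta>' i w) = foldl \<delta> (h i) w" for i w
  proof (induct w arbitrary: i)
    case Nil then show ?case by simp
  next
    case (Cons c w)
    have "\<delta> (h i) c \<in> Q" using cl hQ Cons.prems by blast
    then have "\<delta>' i c < N" "h (\<delta>' i c) = \<delta> (h i) c" using gQ Cons.prems unfolding \<delta>'_def by auto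
    then show ?case using Cons.hyps[of "\<delta>' i c"] by simp
  qed
  have st: "\<forall>q<N. \<forall>c. \<delta>' q c < N" using inv[of _ "[_]"] by simp
  have "{w. foldl \<delta> q0 w \<in> F} = {w. foldl \<delta>' (g q0) w \<in> {i. i < N \<and> h i \<in> F}}"
    using inv[of "g q0"] gQ[OF q0] by auto
  then show ?thesis unfolding regular_def using gQ[OF q0] st by blast
qed

lemma regularE:
  assumes "regular L"
  obtains N and \<delta> :: "nat \<Rightarrow> 'c \<Rightarrow> nat" and q0 F where "q0 < N" "\<forall>q<N. \<forall>c. \<delta> q c < N"
    "L = {w. foldl \<delta> q0 w \<in> F}"
  using assms unfolding regular_def by blast

lemma foldl_bound: "(\<forall>q<N. \<forall>c. \<delta> q c < N) \<Longrightarrow> q < N \<Longrightarrow> foldl \<delta> q w < N"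
  by (induct w arbitrary: q) auto

lemma regular_image:
  fixes \<phi> :: "'c \<Rightarrow> 'd"
  assumes "regular X" "inj \<phi>"
  shows "regular (map \<phi> ` X)"
proof -
  obtain N and \<delta> :: "nat \<Rightarrow> 'c \<Rightarrow> nat" and q0 F where N: "q0 < N" "\<forall>q<N. \<forall>c. \<delta> q c < N"
    and X: "X = {w. foldl \<delta> q0 w \<in> F}" by (rule regularE[OF assms(1)])
  define \<delta>' where "\<delta>' s e = (case s of None \<Rightarrow> None
     | Some q \<Rightarrow> (if e \<in> range \<phi> then Some (\<delta> q (inv \<phi> e)) else None))" for s e
  have d1: "\<delta>' None e = None" for e by (simp add: \<delta>'_def)
  have d2: "\<delta>' (Some q) e = (if e \<in> range \<phi> then Some (\<delta> q (inv \<phi> e)) else None)" for q e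
    by (simp add: \<delta>'_def)
  have dead: "foldl \<delta>' None w = None" for w by (induct w) (auto simp: d1)
  have run: "foldl \<delta>' (Some q) w = (if set w \<subseteq> range \<phi> then Some (foldl \<delta> q (map (inv \<phi>) w)) else None)" for q w
  proof (induct w arbitrary: q)
    case Nil then show ?case by simp
  next
    case (Cons e w) then show ?case by (auto simp: d2 dead)
  qed
  have reg: "regular {w. foldl \<delta>' (Some q0) w \<in> Some ` F}"
  proof (rule regularI[where Q = "insert None (Some ` {..<N})"])
    show "finite (insert None (Some ` {..<N}))" by simp
    show "Some q0 \<in> insert None (Some ` {..<N})" using N by simp
    fix q c assume "q \<in> insert None (Some ` {..<N})"
    then show "\<delta>' q c \<in> insert None (Some ` {..<N})" using N by (auto simp: \<delta>'_def)
  qed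
  have "{w. foldl \<delta>' (Some q0) w \<in> Some ` F} = map \<phi> ` X"
  proof (intro set_eqI iffI)
    fix w assume "w \<in> {w. foldl \<delta>' (Some q0) w \<in> Some ` F}"
    then have r: "foldl \<delta>' (Some q0) w \<in> Some ` F" by simp
    have A: "set w \<subseteq> range \<phi>"
    proof (rule ccontr)
      assume "\<not> set w \<subseteq> range \<phi>"
      then have "foldl \<delta>' (Some q0) w = None" using run[of q0 w] by simp
      with r show False by auto
    qed
    then have "Some (foldl \<delta> q0 (map (inv \<phi>) w)) \<in> Some ` F" using r run[of q0 w] by simp
    then have B: "map (inv \<phi>) w \<in> X" unfolding X by auto
    have "map (\<phi> \<circ> inv \<phi>) w = w"
    proof (rule map_idI)
      fix y assume "y \<in> set w"
      then have "y \<in> range \<phi>" using A by blast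
      then show "(\<phi> \<circ> inv \<phi>) y = y" by (simp add: f_inv_into_f)
    qed
    then have "w = map \<phi> (map (inv \<phi>) w)" by simp
    then show "w \<in> map \<phi> ` X" using B by (rule image_eqI)
  next
    fix w assume "w \<in> map \<phi> ` X"
    then obtain x where x: "x \<in> X" "w = map \<phi> x" by blast
    have "map (inv \<phi> \<circ> \<phi>) x = x" by (rule map_idI) (simp add: inv_f_f[OF assms(2)])
    then have e: "map (inv \<phi>) w = x" using x(2) by simp
    have "set w \<subseteq> range \<phi>" using x(2) by auto
    then have "foldl \<delta>' (Some q0) w = Some (foldl \<delta> q0 x)" using run[of q0 w] e by simp
    moreover have "foldl \<delta> q0 x \<in> F" using x(1) unfolding X by simp
    ultimately show "w \<in> {w. foldl \<delta>' (Some q0) w \<in> Some ` F}" by simp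
  qed
  then show ?thesis using reg by simp
qed

lemma regular_union:
  fixes X Y :: "'a list set"
  assumes "regular X" "regular Y"
  shows "regular (X \<union> Y)"
proof -
  obtain N1 and \<delta>1 :: "nat \<Rightarrow> 'a \<Rightarrow> nat" and q1 F1 where N1: "q1 < N1" "\<forall>q<N1. \<forall>c. \<delta>1 q c < N1"
    and X: "X = {w. foldl \<delta>1 q1 w \<in> F1}" by (rule regularE[OF assms(1)])
  obtain N2 and \<delta>2 :: "nat \<Rightarrow> 'a \<Rightarrow> nat" and q2 F2 where N2: "q2 < N2" "\<forall>q<N2. \<forall>c. \<delta>2 q c < N2"
    and Y: "Y = {w. foldl \<delta>2 q2 w \<in> F2}" by (rule regularE[OF assms(2)])
  define \<delta> where "\<delta> s c = (\<delta>1 (fst s) c, \<delta>2 (snd s) c)" for s c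
  have run: "foldl \<delta> (p, q) w = (foldl \<delta>1 p w, foldl \<delta>2 q w)" for p q w
    by (induct w arbitrary: p q) (auto simp: \<delta>_def)
  have reg: "regular {w. foldl \<delta> (q1, q2) w \<in> {s. fst s \<in> F1 \<or> snd s \<in> F2}}"
  proof (rule regularI[where Q = "{..<N1} \<times> {..<N2}"])
    show "finite ({..<N1} \<times> {..<N2})" by simp
    show "(q1, q2) \<in> {..<N1} \<times> {..<N2}" using N1(1) N2(1) by simp
    fix q c assume q: "q \<in> {..<N1} \<times> {..<N2}"
    have "\<delta>1 (fst q) c < N1" using q N1(2) by auto
    moreover have "\<delta>2 (snd q) c < N2" using q N2(2) by auto
    ultimately show "\<delta> q c \<in> {..<N1} \<times> {..<N2}" unfolding \<delta>_def by simp
  qed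
  have "w \<in> {w. foldl \<delta> (q1, q2) w \<in> {s. fst s \<in> F1 \<or> snd s \<in> F2}} \<longleftrightarrow> w \<in> X \<union> Y" for w
    unfolding X Y using run[of q1 q2 w] by simp
  then have "{w. foldl \<delta> (q1, q2) w \<in> {s. fst s \<in> F1 \<or> snd s \<in> F2}} = X \<union> Y" by blast
  then show ?thesis using reg by simp
qed

lemma regular_marker:
  fixes X Z :: "'a list set"
  assumes "regular X" "regular Z" "\<forall>x\<in>X. c \<notin> set x"
  shows "regular {x @ [c] @ z | x z. x \<in> X \<and> z \<in> Z}"
proof -
  obtain N1 and \<delta>1 :: "nat \<Rightarrow> 'a \<Rightarrow> nat" and q1 F1 where N1: "q1 < N1" "\<forall>q<N1. \<forall>c. \<delta>1 q c < N1"
    and X: "X = {w. foldl \<delta>1 q1 w \<in> F1}" by (rule regularE[OF assms(1)])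
  obtain N2 and \<delta>2 :: "nat \<Rightarrow> 'a \<Rightarrow> nat" and q2 F2 where N2: "q2 < N2" "\<forall>q<N2. \<forall>c. \<delta>2 q c < N2"
    and Z: "Z = {w. foldl \<delta>2 q2 w \<in> F2}" by (rule regularE[OF assms(2)])
  define \<delta> where "\<delta> s e = (case s of None \<Rightarrow> None
     | Some (Inl q) \<Rightarrow> (if e = c then (if q \<in> F1 then Some (Inr q2) else None) else Some (Inl (\<delta>1 q e)))
     | Some (Inr q) \<Rightarrow> Some (Inr (\<delta>2 q e)))" for s e
  have d1: "\<delta> None e = None" for e by (simp add: \<delta>_def)
  have d2: "\<delta> (Some (Inr q)) e = Some (Inr (\<delta>2 q e))" for q e by (simp add: \<delta>_def)
  have d3: "\<delta> (Some (Inl q)) e = (if e = c then (if q \<in> F1 then Some (Inr q2) else None) else Some (Inl (\<delta>1 q e)))" for q e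
    by (simp add: \<delta>_def)
  have dead: "foldl \<delta> None w = None" for w by (induct w) (auto simp: d1)
  have runR: "foldl \<delta> (Some (Inr q)) w = Some (Inr (foldl \<delta>2 q w))" for q w
    by (induct w arbitrary: q) (auto simp: d2)
  have runL: "c \<notin> set w \<Longrightarrow> foldl \<delta> (Some (Inl q)) w = Some (Inl (foldl \<delta>1 q w))" for q w
    by (induct w arbitrary: q) (auto simp: d3)
  have runC: "c \<notin> set x \<Longrightarrow> foldl \<delta> (Some (Inl q)) (x @ c # z) =
     (if foldl \<delta>1 q x \<in> F1 then Some (Inr (foldl \<delta>2 q2 z)) else None)" for q x z
    using runL[of x q] by (simp add: d3 runR dead)
  define Q :: "(nat + nat) option set" where "Q = insert None (Some ` (Inl ` {..<N1} \<union> Inr ` {..<N2}))"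
  have reg: "regular {w. foldl \<delta> (Some (Inl q1)) w \<in> Some ` Inr ` F2}"
  proof (rule regularI[where Q = Q])
    show "finite Q" unfolding Q_def by simp
    show "Some (Inl q1) \<in> Q" unfolding Q_def using N1 by simp
    fix q e assume "q \<in> Q"
    then consider "q = None" | x where "q = Some (Inl x)" "x < N1" | x where "q = Some (Inr x)" "x < N2"
      unfolding Q_def by blast
    then show "\<delta> q e \<in> Q"
    proof cases
      case 1 then show ?thesis unfolding Q_def by (simp add: d1)
    next
      case (2 x)
      have "\<delta>1 x e < N1" using N1(2) 2(2) by blast
      then show ?thesis unfolding Q_def using 2 N2(1) by (simp add: d3)
    next
      case (3 x)
      have "\<delta>2 x e < N2" using N2(2) 3(2) by blast
      then show ?thesis unfolding Q_def using 3 by (simp add: d2)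
    qed
  qed
  have "{w. foldl \<delta> (Some (Inl q1)) w \<in> Some ` Inr ` F2} = {x @ [c] @ z | x z. x \<in> X \<and> z \<in> Z}"
  proof (intro set_eqI iffI)
    fix w assume w: "w \<in> {w. foldl \<delta> (Some (Inl q1)) w \<in> Some ` Inr ` F2}"
    show "w \<in> {x @ [c] @ z | x z. x \<in> X \<and> z \<in> Z}"
    proof (cases "c \<in> set w")
      case False then show ?thesis using w runL[of w q1] by auto
    next
      case True
      then obtain x z where xz: "w = x @ c # z" "c \<notin> set x" by (meson split_list_first)
      then show ?thesis using w runC[of x q1 z] X Z by (auto split: if_splits)
    qed
  next
    fix w assume "w \<in> {x @ [c] @ z | x z. x \<in> X \<and> z \<in> Z}"
    then obtain x z where xz: "w = x @ c # z" "x \<in> X" "z \<in> Z" by auto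
    then have "c \<notin> set x" using assms(3) by blast
    then show "w \<in> {w. foldl \<delta> (Some (Inl q1)) w \<in> Some ` Inr ` F2}"
      using xz runC[of x q1 z] X Z by auto
  qed
  then show ?thesis using reg by simp
qed

lemma regular_eps: "regular {[]}"
proof -
  have reg: "regular {w. foldl (\<lambda>_ _. False) True w \<in> {True}}"
    by (rule regularI[where Q = UNIV]) auto
  have fe: "foldl (\<lambda>_ _. False) b w = (if w = [] then b else False)" for w :: "'c list" and b
    by (induct w arbitrary: b) auto
  have "{w. foldl (\<lambda>_ _. False) True w \<in> {True}} = {[]}" by (auto simp: fe)
  then show ?thesis using reg by metis
qed

lemma regular_cnt:
  assumes "k \<ge> (1::nat)"
  shows "regular {replicate t d | t. Suc t mod k = 0}"
proof -
  define \<delta> where "\<delta> s e = (case s of None \<Rightarrow> None | Some i \<Rightarrow> (if e = d then Some (Suc i mod k) else None))" for s e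
  have d1: "\<delta> None e = None" for e by (simp add: \<delta>_def)
  have d2: "\<delta> (Some i) d = Some (Suc i mod k)" for i by (simp add: \<delta>_def)
  have d3: "e \<noteq> d \<Longrightarrow> \<delta> (Some i) e = None" for i e by (simp add: \<delta>_def)
  have dead: "foldl \<delta> None w = None" for w by (induct w) (simp_all add: d1)
  have run: "foldl \<delta> (Some (i mod k)) w = (if set w \<subseteq> {d} then Some ((i + length w) mod k) else None)" for i w
  proof (induct w arbitrary: i)
    case Nil then show ?case by simp
  next
    case (Cons e w)
    show ?case
    proof (cases "e = d")
      case True
      have m: "Suc (i mod k) mod k = Suc i mod k" by (rule mod_Suc_eq)
      have "foldl \<delta> (Some (i mod k)) (e # w) = foldl \<delta> (Some (Suc i mod k)) w"
        using True d2 m by simp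
      also have "\<dots> = (if set w \<subseteq> {d} then Some ((Suc i + length w) mod k) else None)" by (rule Cons)
      finally show ?thesis using True by simp
    next
      case False
      then show ?thesis using d3[OF False] dead by simp
    qed
  qed
  have reg: "regular {w. foldl \<delta> (Some 0) w \<in> Some ` {i. Suc i mod k = 0}}"
  proof (rule regularI[where Q = "insert None (Some ` {..<k})"])
    fix q c assume "q \<in> insert None (Some ` {..<k})"
    then show "\<delta> q c \<in> insert None (Some ` {..<k})" using assms unfolding \<delta>_def by (auto split: option.splits)
  qed (use assms in auto)
  have r0: "foldl \<delta> (Some 0) w = (if set w \<subseteq> {d} then Some (length w mod k) else None)" for w
    using run[of 0 w] by simp
  have "{w. foldl \<delta> (Some 0) w \<in> Some ` {i. Suc i mod k = 0}} = {replicate t d | t. Suc t mod k = 0}"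
  proof (intro set_eqI iffI)
    fix w assume "w \<in> {w. foldl \<delta> (Some 0) w \<in> Some ` {i. Suc i mod k = 0}}"
    then have w: "foldl \<delta> (Some 0) w \<in> Some ` {i. Suc i mod k = 0}" by simp
    have a: "set w \<subseteq> {d}"
    proof (rule ccontr)
      assume "\<not> set w \<subseteq> {d}" then show False using w r0[of w] by simp
    qed
    then have "Suc (length w mod k) mod k = 0" using w r0[of w] by auto
    then have b: "Suc (length w) mod k = 0" by (simp add: mod_Suc_eq)
    have "replicate (length w) d = w" using a by (intro replicate_length_same) auto
    then show "w \<in> {replicate t d | t. Suc t mod k = 0}" using b by (metis (mono_tags, lifting) mem_Collect_eq)
  next
    fix w assume "w \<in> {replicate t d | t. Suc t mod k = 0}"
    then obtain t where t: "w = replicate t d" "Suc t mod k = 0" by auto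
    have "Suc (t mod k) mod k = 0" using t(2) by (simp add: mod_Suc_eq)
    then show "w \<in> {w. foldl \<delta> (Some 0) w \<in> Some ` {i. Suc i mod k = 0}}"
      using r0[of w] t(1) by auto
  qed
  then show ?thesis using reg by simp
qed

lemma regular_nf:
  "regular {w. P (nfp k 0 w) (w \<noteq> []) (min (run 0 w) k)}"
proof -
  define \<delta> :: "bool \<times> bool \<times> nat \<Rightarrow> bool \<Rightarrow> bool \<times> bool \<times> nat" where
    "\<delta> s x = (if x then (fst s, True, min (Suc (snd (snd s))) k) else (fst s \<and> snd (snd s) < k, True, 0))" for s x
  have run: "foldl \<delta> (ok, ne, min acc k) w = (ok \<and> nfp k acc w, ne \<or> w \<noteq> [], min (run acc w) k)" for ok ne acc w
  proof (induct w arbitrary: ok ne acc)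
    case Nil then show ?case by simp
  next
    case (Cons x w)
    show ?case
    proof (cases x)
      case True
      have "min (Suc (min acc k)) k = min (Suc acc) k" by simp
      then have "\<delta> (ok, ne, min acc k) x = (ok, True, min (Suc acc) k)" using True by (simp add: \<delta>_def)
      then show ?thesis using True Cons[of ok True "Suc acc"] by simp
    next
      case False
      have "(min acc k < k) = (acc < k)" by auto
      then have "\<delta> (ok, ne, min acc k) x = (ok \<and> acc < k, True, min 0 k)" using False by (simp add: \<delta>_def)
      then show ?thesis using False Cons[of "ok \<and> acc < k" True 0] by simp
    qed
  qed
  have reg: "regular {w. foldl \<delta> (True, False, 0) w \<in> {s. P (fst s) (fst (snd s)) (snd (snd s))}}"
  proof (rule regularI[where Q = "UNIV \<times> UNIV \<times> {..k}"])
    fix q c assume "q \<in> (UNIV :: bool set) \<times> (UNIV :: bool set) \<times> {..k}"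
    then show "\<delta> q c \<in> UNIV \<times> UNIV \<times> {..k}" unfolding \<delta>_def by auto
  qed auto
  have e: "foldl \<delta> (True, False, 0) w = (nfp k 0 w, w \<noteq> [], min (run 0 w) k)" for w
    using run[of True False 0 w] by simp
  have "{w. foldl \<delta> (True, False, 0) w \<in> {s. P (fst s) (fst (snd s)) (snd (snd s))}}
      = {w. P (nfp k 0 w) (w \<noteq> []) (min (run 0 w) k)}" by (simp only: e) simp
  then show ?thesis using reg by simp
qed



lemma padR_Cons[simp]: "padR (a # y) (b # z) = (Some a, Some b) # padR y z"
  by (simp add: padR_def Let_def)

lemma padR_Nil1[simp]: "padR [] z = map (\<lambda>e. (None, Some e)) z"
  by (induct z) (simp_all add: padR_def Let_def)

lemma padR_Nil2[simp]: "padR y [] = map (\<lambda>e. (Some e, None)) y"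
  by (induct y) (simp_all add: padR_def Let_def)

lemma padR_prefix: "padR (x @ y) (x @ z) = map (\<lambda>e. (Some e, Some e)) x @ padR y z"
  by (induct x) simp_all

lemma padR_same: "padR u u = map (\<lambda>e. (Some e, Some e)) u"
  using padR_prefix[of u "[]" "[]"] by simp

lemma padR_snoc: "padR u (u @ [c]) = map (\<lambda>e. (Some e, Some e)) u @ [(None, Some c)]"
  using padR_prefix[of u "[]" "[c]"] by simp

lemma padR_diff: "padR (x @ a # y) (x @ [c]) = map (\<lambda>e. (Some e, Some e)) x @ [(Some a, Some c)] @ map (\<lambda>e. (Some e, None)) y"
  using padR_prefix[of x "a # y" "[c]"] by simp

definition cl :: "nat \<Rightarrow> bool \<Rightarrow> bool list set" where
  "cl k b = cls k [b]"

definition psi :: "nat \<Rightarrow> bool \<Rightarrow> bool list set option \<times> bool list set option" where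
  "psi k b = (Some (cl k b), Some (cl k b))"

definition NFb :: "nat \<Rightarrow> bool list set" where
  "NFb k = {w. nfp k 0 w \<and> w \<noteq> []}"

definition Lk :: "nat \<Rightarrow> bool list set list set" where
  "Lk k = map (cl k) ` NFb k"

lemma cl_carrier: "cl k b \<in> sgp_carrier (rel_akb k)"
  unfolding cl_def carrier_cls by blast

lemma cl_inj: "inj (cl k)"
proof (rule injI)
  fix x y assume e: "cl k x = cl k y"
  show "x = y"
  proof (rule ccontr)
    assume "x \<noteq> y"
    have "([x], [y]) \<in> PC k" using e cls_eq_iff[of "[x]" k "[y]"] unfolding cl_def by simp
    then have "bc [x] = bc [y]" using pc_inv by blast
    then show False using \<open>x \<noteq> y\<close> by (cases x; cases y) simp_all
  qed
qed

lemma psi_inj: "inj (psi k)"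
  using cl_inj unfolding psi_def inj_def by simp

lemma concat_cl: "w \<noteq> [] \<Longrightarrow> (w, concat (map (rep \<circ> cl k) w)) \<in> PC k"
proof (induct w)
  case Nil then show ?case by simp
next
  case (Cons x w)
  have 1: "([x], rep (cl k x)) \<in> PC k" unfolding cl_def by (rule rep_cls) simp
  show ?case
  proof (cases "w = []")
    case True then show ?thesis using 1 by simp
  next
    case False
    have "([x] @ w, rep (cl k x) @ concat (map (rep \<circ> cl k) w)) \<in> PC k"
      using pc_app[OF 1 Cons.hyps[OF False]] .
    then show ?thesis by (simp add: comp_def)
  qed
qed

lemma eval_cl: "w \<noteq> [] \<Longrightarrow> evalw (sgp_mult (rel_akb k)) (map (cl k) w) = cls k w"
proof -
  assume ne: "w \<noteq> []"
  have "set (map (cl k) w) \<subseteq> sgp_carrier (rel_akb k)" using cl_carrier by auto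
  then have "evalw (sgp_mult (rel_akb k)) (map (cl k) w) = cls k (concat (map rep (map (cl k) w)))"
    using evalw_carrier ne by simp
  also have "\<dots> = cls k w"
  proof -
    have "(w, concat (map (rep \<circ> cl k) w)) \<in> PC k" by (rule concat_cl[OF ne])
    then have "cls k w = cls k (concat (map (rep \<circ> cl k) w))" using cls_eq_iff[OF ne] by simp
    then show ?thesis by simp
  qed
  finally show ?thesis .
qed

lemma rmul_cl: "w \<noteq> [] \<Longrightarrow> rmul (sgp_mult (rel_akb k)) (evalw (sgp_mult (rel_akb k)) (map (cl k) w)) (Some (cl k b)) = cls k (w @ [b])"
  using eval_cl mult_cls[of w "[b]" k] unfolding rmul_def cl_def by simp

lemma Lk_eval_eq:
  assumes "w1 \<in> NFb k" "w2 \<in> NFb k" "(w1, w2) \<in> PC k"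
  shows "w1 = w2"
  using nf_unique assms unfolding NFb_def by blast

lemma cls_eq_nf:
  assumes "w1 \<in> NFb k" "w2 \<noteq> []" "cls k w1 = cls k w2"
  shows "(w1, w2) \<in> PC k"
  using cls_eq_iff assms unfolding NFb_def by blast

lemma decomp: "\<exists>x0. w = x0 @ replicate (run 0 w) True \<and> run 0 x0 = 0"
proof (induct w rule: rev_induct)
  case Nil then show ?case by simp
next
  case (snoc x w)
  then obtain x0 where x0: "w = x0 @ replicate (run 0 w) True" "run 0 x0 = 0" by blast
  show ?case
  proof (cases x)
    case True
    have "run 0 (w @ [x]) = Suc (run 0 w)" using True by simp
    moreover have "x0 @ replicate (Suc (run 0 w)) True = (x0 @ replicate (run 0 w) True) @ [True]"
      by (simp add: replicate_append_same[symmetric])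
    ultimately have "w @ [x] = x0 @ replicate (run 0 (w @ [x])) True" using x0(1) True by simp
    then show ?thesis using x0(2) by (intro exI[of _ x0]) simp
  next
    case False
    have "run 0 (w @ [x]) = 0" using False by simp
    then show ?thesis by (intro exI[of _ "w @ [x]"]) simp
  qed
qed


lemma Lk_elem: "u \<in> Lk k \<longleftrightarrow> (\<exists>w. w \<in> NFb k \<and> u = map (cl k) w)"
  unfolding Lk_def by blast

lemma E0:
  "{padR u v | u v. u \<in> Lk k \<and> v \<in> Lk k \<and> evalw (sgp_mult (rel_akb k)) u = evalw (sgp_mult (rel_akb k)) v}
   = map (psi k) ` NFb k"
proof (intro set_eqI iffI)
  fix p assume "p \<in> {padR u v | u v. u \<in> Lk k \<and> v \<in> Lk k \<and> evalw (sgp_mult (rel_akb k)) u = evalw (sgp_mult (rel_akb k)) v}"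
  then obtain w1 w2 where w: "w1 \<in> NFb k" "w2 \<in> NFb k" "p = padR (map (cl k) w1) (map (cl k) w2)"
    "evalw (sgp_mult (rel_akb k)) (map (cl k) w1) = evalw (sgp_mult (rel_akb k)) (map (cl k) w2)"
    unfolding Lk_elem by blast
  have ne: "w1 \<noteq> []" "w2 \<noteq> []" using w unfolding NFb_def by auto
  have "cls k w1 = cls k w2" using w(4) eval_cl[OF ne(1)] eval_cl[OF ne(2)] by simp
  then have "(w1, w2) \<in> PC k" using cls_eq_nf[OF w(1) ne(2)] by simp
  then have "w1 = w2" using Lk_eval_eq w by blast
  then have "p = map (psi k) w1" using w(3) by (simp add: padR_same psi_def)
  then show "p \<in> map (psi k) ` NFb k" using w(1) by blast
next
  fix p assume "p \<in> map (psi k) ` NFb k"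
  then obtain w where w: "w \<in> NFb k" "p = map (psi k) w" by blast
  have "p = padR (map (cl k) w) (map (cl k) w)" using w(2) by (simp add: padR_same psi_def)
  moreover have "map (cl k) w \<in> Lk k" using w(1) unfolding Lk_def by blast
  ultimately show "p \<in> {padR u v | u v. u \<in> Lk k \<and> v \<in> Lk k \<and> evalw (sgp_mult (rel_akb k)) u = evalw (sgp_mult (rel_akb k)) v}"
    unfolding mem_Collect_eq by (intro exI[of _ "map (cl k) w"] conjI) simp_all
qed

lemma LR_None: "LR (sgp_mult (rel_akb k)) (Lk k) None = map (psi k) ` NFb k"
  unfolding LR_def rmul_def using E0 by simp

lemma nfp_prefix: "nfp k acc (p @ s) \<Longrightarrow> nfp k acc p"
  using nfp_append by blast

lemma Pref_Lk: "v \<in> Pref (Lk k) \<Longrightarrow> v \<noteq> [] \<Longrightarrow> v \<in> Lk k"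
proof -
  assume v: "v \<in> Pref (Lk k)" "v \<noteq> []"
  then obtain u s where us: "u \<in> Lk k" "u = v @ s" unfolding Pref_def by blast
  then obtain w where w: "w \<in> NFb k" "u = map (cl k) w" unfolding Lk_elem by blast
  define w' where "w' = take (length v) w"
  have "v = take (length v) u" using us(2) by simp
  then have vw: "v = map (cl k) w'" using w(2) unfolding w'_def by (simp add: take_map)
  have "nfp k 0 w" using w(1) unfolding NFb_def by simp
  then have "nfp k 0 (w' @ drop (length v) w)" unfolding w'_def by simp
  then have 1: "nfp k 0 w'" by (rule nfp_prefix)
  have 2: "w' \<noteq> []" using vw v(2) by auto
  have "w' \<in> NFb k" using 1 2 unfolding NFb_def by simp
  then show ?thesis using vw unfolding Lk_def by (rule rev_image_eqI)
qed

lemma PrefLang: "{padR u v | u v. u \<in> Lk k \<and> v \<in> Pref (Lk k) \<and> v \<noteq> [] \<and> evalw (sgp_mult (rel_akb k)) u = evalw (sgp_mult (rel_akb k)) v}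
   = map (psi k) ` NFb k"
proof -
  have "{padR u v | u v. u \<in> Lk k \<and> v \<in> Pref (Lk k) \<and> v \<noteq> [] \<and> evalw (sgp_mult (rel_akb k)) u = evalw (sgp_mult (rel_akb k)) v}
     = {padR u v | u v. u \<in> Lk k \<and> v \<in> Lk k \<and> evalw (sgp_mult (rel_akb k)) u = evalw (sgp_mult (rel_akb k)) v}"
  proof (intro Collect_cong iffI)
    fix p assume "\<exists>u v. p = padR u v \<and> u \<in> Lk k \<and> v \<in> Pref (Lk k) \<and> v \<noteq> [] \<and> evalw (sgp_mult (rel_akb k)) u = evalw (sgp_mult (rel_akb k)) v"
    then show "\<exists>u v. p = padR u v \<and> u \<in> Lk k \<and> v \<in> Lk k \<and> evalw (sgp_mult (rel_akb k)) u = evalw (sgp_mult (rel_akb k)) v"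
      using Pref_Lk by blast
  next
    fix p assume "\<exists>u v. p = padR u v \<and> u \<in> Lk k \<and> v \<in> Lk k \<and> evalw (sgp_mult (rel_akb k)) u = evalw (sgp_mult (rel_akb k)) v"
    then obtain u v where uv: "p = padR u v" "u \<in> Lk k" "v \<in> Lk k" "evalw (sgp_mult (rel_akb k)) u = evalw (sgp_mult (rel_akb k)) v" by blast
    have "v \<in> Pref (Lk k)" unfolding Pref_def by (intro CollectI bexI[of _ v] exI[of _ "[]"]) (simp_all add: uv(3))
    moreover have "v \<noteq> []"
    proof -
      obtain w where "w \<in> NFb k" "v = map (cl k) w" using uv(3) unfolding Lk_elem by blast
      then show ?thesis unfolding NFb_def by simp
    qed
    ultimately show "\<exists>u v. p = padR u v \<and> u \<in> Lk k \<and> v \<in> Pref (Lk k) \<and> v \<noteq> [] \<and> evalw (sgp_mult (rel_akb k)) u = evalw (sgp_mult (rel_akb k)) v"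
      using uv by (intro exI[of _ u] exI[of _ v] conjI) simp_all
  qed
  then show ?thesis using E0 by simp
qed


lemma diag_map: "map (\<lambda>e. (Some e, Some e)) (map (cl k) w) = map (psi k) w"
  by (simp add: psi_def)

lemma nfp_snoc_True: "nfp k 0 w \<Longrightarrow> nfp k 0 (w @ [True])"
  using nfp_append[of k 0 w "[True]"] by simp

lemma E1: "LR (sgp_mult (rel_akb k)) (Lk k) (Some (cl k True))
   = {x @ [(None, Some (cl k True))] @ z | x z. x \<in> map (psi k) ` NFb k \<and> z \<in> {[]}}"
proof (intro set_eqI iffI)
  fix p assume "p \<in> LR (sgp_mult (rel_akb k)) (Lk k) (Some (cl k True))"
  then obtain u v where uv: "p = padR u v" "u \<in> Lk k" "v \<in> Lk k"
    "rmul (sgp_mult (rel_akb k)) (evalw (sgp_mult (rel_akb k)) u) (Some (cl k True)) = evalw (sgp_mult (rel_akb k)) v"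
    unfolding LR_def by blast
  obtain w1 where w1: "w1 \<in> NFb k" "u = map (cl k) w1" using uv(2) unfolding Lk_elem by blast
  obtain w2 where w2: "w2 \<in> NFb k" "v = map (cl k) w2" using uv(3) unfolding Lk_elem by blast
  have ne1: "w1 \<noteq> []" and ne2: "w2 \<noteq> []" using w1 w2 unfolding NFb_def by auto
  have "cls k (w1 @ [True]) = cls k w2" using uv(4) rmul_cl[OF ne1] eval_cl[OF ne2] w1(2) w2(2) by simp
  moreover have n: "w1 @ [True] \<in> NFb k" using w1(1) nfp_snoc_True unfolding NFb_def by auto
  ultimately have "(w1 @ [True], w2) \<in> PC k" using cls_eq_nf[OF n ne2] by simp
  then have "w2 = w1 @ [True]" using Lk_eval_eq[OF n w2(1)] by simp
  then have "p = map (psi k) w1 @ [(None, Some (cl k True))] @ []"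
    using uv(1) w1(2) w2(2) by (simp add: padR_snoc psi_def)
  moreover have "map (psi k) w1 \<in> map (psi k) ` NFb k" using w1(1) by blast
  ultimately show "p \<in> {x @ [(None, Some (cl k True))] @ z | x z. x \<in> map (psi k) ` NFb k \<and> z \<in> {[]}}"
    by blast
next
  fix p assume "p \<in> {x @ [(None, Some (cl k True))] @ z | x z. x \<in> map (psi k) ` NFb k \<and> z \<in> {[]}}"
  then obtain w where w: "w \<in> NFb k" "p = map (psi k) w @ [(None, Some (cl k True))]" by auto
  have ne: "w \<noteq> []" using w(1) unfolding NFb_def by simp
  have n: "w @ [True] \<in> NFb k" using w(1) nfp_snoc_True unfolding NFb_def by auto
  have "p = padR (map (cl k) w) (map (cl k) (w @ [True]))" using w(2) by (simp add: padR_snoc psi_def)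
  moreover have "map (cl k) w \<in> Lk k" using w(1) unfolding Lk_def by blast
  moreover have "map (cl k) (w @ [True]) \<in> Lk k" using n unfolding Lk_def by blast
  moreover have "rmul (sgp_mult (rel_akb k)) (evalw (sgp_mult (rel_akb k)) (map (cl k) w)) (Some (cl k True))
      = evalw (sgp_mult (rel_akb k)) (map (cl k) (w @ [True]))"
    using rmul_cl[OF ne] eval_cl[of "w @ [True]" k] by simp
  ultimately show "p \<in> LR (sgp_mult (rel_akb k)) (Lk k) (Some (cl k True))"
    unfolding LR_def mem_Collect_eq by (intro exI[of _ "map (cl k) w"] exI[of _ "map (cl k) (w @ [True])"] conjI)
qed


definition X1 :: "nat \<Rightarrow> bool list set" where
  "X1 k = {w. nfp k 0 w \<and> w \<noteq> [] \<and> min (run 0 w) k < k}"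
definition X2 :: "nat \<Rightarrow> bool list set" where
  "X2 k = {w. nfp k 0 w \<and> min (run 0 w) k < k}"

definition P1 where "P1 k = {x @ [(None, Some (cl k False))] @ z | x z. x \<in> map (psi k) ` X1 k \<and> z \<in> {[]}}"
definition P2 where "P2 k = {x @ [(Some (cl k True), Some (cl k False))] @ z | x z. x \<in> map (psi k) ` X2 k
   \<and> z \<in> {replicate t (Some (cl k True), None) | t. Suc t mod k = 0}}"

lemma nfp_snoc_False: "nfp k 0 w \<Longrightarrow> run 0 w < k \<Longrightarrow> nfp k 0 (w @ [False])"
  using nfp_append[of k 0 w "[False]"] by simp

lemma nfp_app_True: "nfp k 0 w \<Longrightarrow> nfp k 0 (w @ replicate j True)"
  using nfp_append[of k 0 w "replicate j True"] nfp_repl[of k "run 0 w" j "[]"] by simp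

lemma E2_sub:
  assumes k: "k \<ge> 1"
  assumes w1: "w1 \<in> NFb k" and w2: "w2 \<in> NFb k" and e: "cls k (w1 @ [False]) = cls k w2"
  shows "padR (map (cl k) w1) (map (cl k) w2) \<in> P1 k \<union> P2 k"
proof -
  have ne1: "w1 \<noteq> []" and ne2: "w2 \<noteq> []" and nf1: "nfp k 0 w1" using w1 w2 unfolding NFb_def by auto
  have pc: "(w2, w1 @ [False]) \<in> PC k" using e cls_eq_iff[of w2 k "w1 @ [False]"] ne2 by simp
  obtain x0 where x0: "w1 = x0 @ replicate (run 0 w1) True" "run 0 x0 = 0" using decomp by blast
  define j where "j = run 0 w1"
  have nfx0: "nfp k 0 x0" using nf1 x0(1) nfp_prefix by metis
  show ?thesis
  proof (cases "j < k")
    case True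
    have n: "w1 @ [False] \<in> NFb k" using nfp_snoc_False[OF nf1] True unfolding NFb_def j_def by simp
    have "w2 = w1 @ [False]" using Lk_eval_eq[OF w2 n pc] .
    then have "padR (map (cl k) w1) (map (cl k) w2) = map (psi k) w1 @ [(None, Some (cl k False))] @ []"
      by (simp add: padR_snoc psi_def)
    moreover have "w1 \<in> X1 k" using nf1 ne1 True unfolding X1_def j_def by simp
    ultimately show ?thesis unfolding P1_def by blast
  next
    case False
    define r where "r = j mod k"
    define t where "t = j - r - 1"
    define x1 where "x1 = x0 @ replicate r True"
    have rk: "r < k" unfolding r_def using k by simp
    have jr: "j - r = k * (j div k)" unfolding r_def by (simp add: minus_mod_eq_mult_div)
    have "0 < j div k" using False k by (simp add: div_greater_zero_iff)
    then have "k * 1 \<le> k * (j div k)" by (intro mult_le_mono2) simp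
    then have "k * (j div k) \<ge> k" by simp
    then have tt: "Suc t = j - r" unfolding t_def using jr k by simp
    have smod: "Suc t mod k = 0" using tt jr by simp
    have rj: "r \<le> j" unfolding r_def by simp
    have w1d: "w1 = x1 @ replicate (Suc t) True"
    proof -
      have "replicate j True = replicate r True @ replicate (Suc t) True"
        using tt rj by (simp add: replicate_add[symmetric])
      then show ?thesis using x0(1) unfolding x1_def j_def by simp
    qed
    have runx1: "run 0 x1 = r" unfolding x1_def using x0(2) by simp
    have nfx1: "nfp k 0 x1" unfolding x1_def using nfp_app_True[OF nfx0] .
    have n: "x1 @ [False] \<in> NFb k" using nfp_snoc_False[OF nfx1] runx1 rk unfolding NFb_def by simp
    have w1j: "w1 = x0 @ replicate j True" using x0(1) unfolding j_def .
    have "(replicate j True @ [False], replicate r True @ [False]) \<in> PC k"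
      unfolding r_def by (rule pc_repl_modk)
    then have "(x0 @ (replicate j True @ [False]) @ [], x0 @ (replicate r True @ [False]) @ []) \<in> PC k"
      by (rule pc_ctx)
    moreover have "w1 @ [False] = x0 @ (replicate j True @ [False]) @ []" using w1j by simp
    moreover have "x1 @ [False] = x0 @ (replicate r True @ [False]) @ []" unfolding x1_def by simp
    ultimately have "(w1 @ [False], x1 @ [False]) \<in> PC k" by simp
    then have "(w2, x1 @ [False]) \<in> PC k" using pc_trans[OF pc] by blast
    then have w2e: "w2 = x1 @ [False]" using Lk_eval_eq[OF w2 n] by blast
    have "padR (map (cl k) w1) (map (cl k) w2) = map (psi k) x1 @ [(Some (cl k True), Some (cl k False))] @ replicate t (Some (cl k True), None)"
      unfolding w1d w2e using padR_diff[of "map (cl k) x1" "cl k True" "map (cl k) (replicate t True)" "cl k False"]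
      by (simp add: psi_def)
    moreover have "x1 \<in> X2 k" using nfx1 runx1 rk unfolding X2_def by simp
    ultimately have "padR (map (cl k) w1) (map (cl k) w2) \<in> P2 k"
      unfolding P2_def mem_Collect_eq using smod
      by (intro exI[of _ "map (psi k) x1"] exI[of _ "replicate t (Some (cl k True), None)"] conjI) auto
    then show ?thesis by (rule UnI2)
  qed
qed

lemma E2:
  assumes k: "k \<ge> 1"
  shows "LR (sgp_mult (rel_akb k)) (Lk k) (Some (cl k False)) = P1 k \<union> P2 k"
proof (intro set_eqI iffI)
  fix p assume "p \<in> LR (sgp_mult (rel_akb k)) (Lk k) (Some (cl k False))"
  then obtain u v where uv: "p = padR u v" "u \<in> Lk k" "v \<in> Lk k"
    "rmul (sgp_mult (rel_akb k)) (evalw (sgp_mult (rel_akb k)) u) (Some (cl k False)) = evalw (sgp_mult (rel_akb k)) v"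
    unfolding LR_def by blast
  obtain w1 where w1: "w1 \<in> NFb k" "u = map (cl k) w1" using uv(2) unfolding Lk_elem by blast
  obtain w2 where w2: "w2 \<in> NFb k" "v = map (cl k) w2" using uv(3) unfolding Lk_elem by blast
  have ne1: "w1 \<noteq> []" and ne2: "w2 \<noteq> []" using w1 w2 unfolding NFb_def by auto
  have "cls k (w1 @ [False]) = cls k w2" using uv(4) rmul_cl[OF ne1] eval_cl[OF ne2] w1(2) w2(2) by simp
  then show "p \<in> P1 k \<union> P2 k" using E2_sub[OF k w1(1) w2(1)] uv(1) w1(2) w2(2) by simp
next
  fix p assume p: "p \<in> P1 k \<union> P2 k"
  have mem: "p \<in> LR (sgp_mult (rel_akb k)) (Lk k) (Some (cl k False))"
    if "p = padR (map (cl k) a) (map (cl k) b)" "a \<in> NFb k" "b \<in> NFb k" "(a @ [False], b) \<in> PC k" for a b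
  proof -
    have nea: "a \<noteq> []" and neb: "b \<noteq> []" using that unfolding NFb_def by auto
    have "cls k (a @ [False]) = cls k b" using that(4) cls_eq_iff[of "a @ [False]" k b] by simp
    then have "rmul (sgp_mult (rel_akb k)) (evalw (sgp_mult (rel_akb k)) (map (cl k) a)) (Some (cl k False))
      = evalw (sgp_mult (rel_akb k)) (map (cl k) b)" using rmul_cl[OF nea] eval_cl[OF neb] by simp
    moreover have "map (cl k) a \<in> Lk k" unfolding Lk_def by (rule imageI[OF that(2)])
    moreover have "map (cl k) b \<in> Lk k" unfolding Lk_def by (rule imageI[OF that(3)])
    ultimately show ?thesis using that(1)
      unfolding LR_def mem_Collect_eq by (intro exI[of _ "map (cl k) a"] exI[of _ "map (cl k) b"] conjI)
  qed
  from p show "p \<in> LR (sgp_mult (rel_akb k)) (Lk k) (Some (cl k False))"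
  proof
    assume "p \<in> P1 k"
    then obtain y z where yz: "y \<in> map (psi k) ` X1 k" "z \<in> {[]}" "p = y @ [(None, Some (cl k False))] @ z"
      unfolding P1_def by blast
    from yz(1) obtain w where w0: "w \<in> X1 k" "y = map (psi k) w" by blast
    have w: "w \<in> X1 k" "p = map (psi k) w @ [(None, Some (cl k False))]" using w0 yz(2,3) by simp_all
    have nf: "nfp k 0 w" "w \<noteq> []" "run 0 w < k" using w(1) unfolding X1_def by auto
    have a: "w \<in> NFb k" using nf unfolding NFb_def by simp
    have b: "w @ [False] \<in> NFb k" using nfp_snoc_False[OF nf(1) nf(3)] unfolding NFb_def by simp
    have pe: "p = padR (map (cl k) w) (map (cl k) (w @ [False]))" using w(2) by (simp add: padR_snoc psi_def)
    have r: "(w @ [False], w @ [False]) \<in> PC k" by (rule pc_refl) simp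
    show ?thesis by (rule mem[OF pe a b r])
  next
    assume "p \<in> P2 k"
    then obtain y z where yz0: "p = y @ [(Some (cl k True), Some (cl k False))] @ z \<and> y \<in> map (psi k) ` X2 k \<and> (\<exists>t. z = replicate t (Some (cl k True), None) \<and> Suc t mod k = 0)"
      unfolding P2_def mem_Collect_eq by (elim exE) (erule that)
    then have yz: "y \<in> map (psi k) ` X2 k" "\<exists>t. z = replicate t (Some (cl k True), None) \<and> Suc t mod k = 0"
      "p = y @ [(Some (cl k True), Some (cl k False))] @ z" by simp_all
    from yz(1) obtain x where x: "x \<in> X2 k" "y = map (psi k) x" by blast
    from yz(2) obtain t where t0: "z = replicate t (Some (cl k True), None) \<and> Suc t mod k = 0"
      by (elim exE) (erule that)
    then have t: "Suc t mod k = 0" "z = replicate t (Some (cl k True), None)" by simp_all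
    have xt: "x \<in> X2 k" "Suc t mod k = 0"
      "p = map (psi k) x @ [(Some (cl k True), Some (cl k False))] @ replicate t (Some (cl k True), None)"
      using x t yz(3) by simp_all
    have nf: "nfp k 0 x" "run 0 x < k" using xt(1) unfolding X2_def by auto
    have "nfp k 0 (x @ replicate (Suc t) True)" by (rule nfp_app_True[OF nf(1)])
    then have a: "x @ replicate (Suc t) True \<in> NFb k" unfolding NFb_def by (simp del: replicate_Suc)
    have b: "x @ [False] \<in> NFb k" using nfp_snoc_False[OF nf] unfolding NFb_def by simp
    have "p = padR (map (cl k) (x @ True # replicate t True)) (map (cl k) (x @ [False]))"
      using xt(3) padR_diff[of "map (cl k) x" "cl k True" "map (cl k) (replicate t True)" "cl k False"]
      by (simp add: psi_def)
    then have pe: "p = padR (map (cl k) (x @ replicate (Suc t) True)) (map (cl k) (x @ [False]))" by simp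
    have eq: "k * (Suc t div k) + 0 = Suc t" using mult_div_mod_eq[of k "Suc t"] xt(2) by simp
    have "(replicate (k * (Suc t div k) + 0) True @ [False], replicate 0 True @ [False]) \<in> PC k"
      by (rule pc_repl_mod)
    then have "(replicate (Suc t) True @ [False], [False]) \<in> PC k" by (simp only: eq) simp
    then have "(x @ (replicate (Suc t) True @ [False]) @ [], x @ [False] @ []) \<in> PC k"
      by (rule pc_ctx)
    then have r: "((x @ replicate (Suc t) True) @ [False], x @ [False]) \<in> PC k" by simp
    show ?thesis by (rule mem[OF pe a b r])
  qed
qed


lemma reg_NFb: "regular (NFb k)"
  unfolding NFb_def using regular_nf[where P = "\<lambda>a b c. a \<and> b" and k = k] by simp

lemma reg_X1: "regular (X1 k)"
  unfolding X1_def using regular_nf[where P = "\<lambda>a b c. a \<and> b \<and> c < k" and k = k] by simp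

lemma reg_X2: "regular (X2 k)"
  unfolding X2_def using regular_nf[where P = "\<lambda>a b c. a \<and> c < k" and k = k] by simp

lemma psi_ne_None: "\<forall>x \<in> map (psi k) ` S. (None, y) \<notin> set x"
  by (auto simp: psi_def)

lemma psi_ne_ab: "\<forall>x \<in> map (psi k) ` S. (Some (cl k True), Some (cl k False)) \<notin> set x"
proof (intro ballI)
  fix x assume "x \<in> map (psi k) ` S"
  then obtain w where w: "x = map (psi k) w" by blast
  have "cl k True \<noteq> cl k False" using cl_inj[of k] unfolding inj_def by blast
  then show "(Some (cl k True), Some (cl k False)) \<notin> set x" unfolding w psi_def by auto
qed

lemma surj_Lk:
  assumes k: "k \<ge> 1"
  shows "evalw (sgp_mult (rel_akb k)) ` Lk k = sgp_carrier (rel_akb k)"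
proof (intro set_eqI iffI)
  fix X assume "X \<in> evalw (sgp_mult (rel_akb k)) ` Lk k"
  then obtain w where w: "w \<in> NFb k" "X = evalw (sgp_mult (rel_akb k)) (map (cl k) w)" unfolding Lk_def by blast
  have ne: "w \<noteq> []" using w(1) unfolding NFb_def by simp
  have "X = cls k w" using w(2) eval_cl[OF ne] by simp
  then show "X \<in> sgp_carrier (rel_akb k)" unfolding carrier_cls using ne by blast
next
  fix X assume "X \<in> sgp_carrier (rel_akb k)"
  then obtain w0 where w0: "w0 \<noteq> []" "X = cls k w0" unfolding carrier_cls by blast
  define w where "w = nfa k 0 w0"
  have "nfp k 0 w" unfolding w_def by (rule nfp_of_nfa[OF k])
  moreover have "w \<noteq> []" unfolding w_def using nfa_ne w0(1) by blast
  ultimately have wn: "w \<in> NFb k" unfolding NFb_def by simp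
  have "(w0, w) \<in> PC k" unfolding w_def by (rule nf_rel[OF w0(1)])
  then have "cls k w0 = cls k w" using cls_eq_iff[OF w0(1)] by simp
  then have "X = evalw (sgp_mult (rel_akb k)) (map (cl k) w)" using w0(2) eval_cl[OF \<open>w \<noteq> []\<close>] by simp
  moreover have "map (cl k) w \<in> Lk k" unfolding Lk_def using wn by (rule imageI)
  ultimately show "X \<in> evalw (sgp_mult (rel_akb k)) ` Lk k" by (rule image_eqI)
qed

lemma positive:
  assumes k: "k \<ge> 1"
  shows "prefix_automatic (sgp_carrier (rel_akb k)) (sgp_mult (rel_akb k))"
proof -
  let ?A = "range (cl k)"
  have gl: "gen_lang (sgp_carrier (rel_akb k)) (sgp_mult (rel_akb k)) ?A (Lk k)"
    unfolding gen_lang_def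
  proof (intro conjI)
    show "finite ?A" by simp
    show "?A \<subseteq> sgp_carrier (rel_akb k)" using cl_carrier by blast
    show "\<forall>w\<in>Lk k. w \<noteq> [] \<and> set w \<subseteq> ?A"
    proof
      fix u assume "u \<in> Lk k"
      then obtain w where w: "w \<in> NFb k" "u = map (cl k) w" unfolding Lk_elem by blast
      then have "w \<noteq> []" unfolding NFb_def by simp
      then show "u \<noteq> [] \<and> set u \<subseteq> ?A" using w(2) by auto
    qed
    show "regular (Lk k)" unfolding Lk_def by (rule regular_image[OF reg_NFb cl_inj])
    show "evalw (sgp_mult (rel_akb k)) ` Lk k = sgp_carrier (rel_akb k)" by (rule surj_Lk[OF k])
  qed
  have r0: "regular (map (psi k) ` NFb k)" by (rule regular_image[OF reg_NFb psi_inj])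
  have lr: "\<forall>a\<in>insert None (Some ` ?A). regular (LR (sgp_mult (rel_akb k)) (Lk k) a)"
  proof
    fix a assume "a \<in> insert None (Some ` ?A)"
    then consider "a = None" | b where "a = Some (cl k b)" by blast
    then consider "a = None" | "a = Some (cl k True)" | "a = Some (cl k False)"
    proof cases
      case 1 then show ?thesis using that by blast
    next
      case (2 b) then show ?thesis using that by (cases b) auto
    qed
    then show "regular (LR (sgp_mult (rel_akb k)) (Lk k) a)"
    proof cases
      case 1 then show ?thesis using LR_None r0 by simp
    next
      case 2
      have "regular {x @ [(None, Some (cl k True))] @ z | x z. x \<in> map (psi k) ` NFb k \<and> z \<in> {[]}}"
        by (rule regular_marker[OF r0 regular_eps psi_ne_None])
      then show ?thesis using 2 E1 by simp
    next
      case 3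
      have p1: "regular (P1 k)" unfolding P1_def
        by (rule regular_marker[OF regular_image[OF reg_X1 psi_inj] regular_eps psi_ne_None])
      have p2: "regular (P2 k)" unfolding P2_def
        by (rule regular_marker[OF regular_image[OF reg_X2 psi_inj] regular_cnt[OF k] psi_ne_ab])
      have "regular (P1 k \<union> P2 k)" by (rule regular_union[OF p1 p2])
      then show ?thesis using 3 E2[OF k] by simp
    qed
  qed
  have as: "automatic_structure (sgp_carrier (rel_akb k)) (sgp_mult (rel_akb k)) ?A (Lk k)"
    unfolding automatic_structure_def by (intro conjI gl lr)
  have "regular {padR u v | u v. u \<in> Lk k \<and> v \<in> Pref (Lk k) \<and> v \<noteq> [] \<and> evalw (sgp_mult (rel_akb k)) u = evalw (sgp_mult (rel_akb k)) v}"
    using PrefLang r0 by simp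
  then show ?thesis unfolding prefix_automatic_def by (intro exI[of _ ?A] exI[of _ "Lk k"] conjI as)
qed



lemma padL_fst: "map fst (padL u v) = replicate (max (length u) (length v) - length u) None @ map Some u"
  unfolding padL_def Let_def by (simp add: map_fst_zip)

lemma padL_snd: "map snd (padL u v) = replicate (max (length u) (length v) - length v) None @ map Some v"
  unfolding padL_def Let_def by (simp add: map_snd_zip)

lemma recover: "map the (filter (\<lambda>x. x \<noteq> None) (replicate n None @ map Some u)) = u"
proof -
  have f1: "filter (\<lambda>x. x \<noteq> None) (map Some u) = map Some u" by (induct u) simp_all
  have f2: "filter (\<lambda>x. x \<noteq> None) (replicate n (None :: 'a option)) = []" by (induct n) simp_all
  have "filter (\<lambda>x. x \<noteq> None) (replicate n None @ map Some u) = map Some u"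
    by (simp only: filter_append f1 f2) simp
  then show ?thesis by (simp add: comp_def)
qed

lemma padL_inj: "padL u v = padL u' v' \<Longrightarrow> u = u' \<and> v = v'"
proof -
  assume e: "padL u v = padL u' v'"
  have "u = map the (filter (\<lambda>x. x \<noteq> None) (map fst (padL u v)))" unfolding padL_fst recover ..
  also have "\<dots> = u'" unfolding e padL_fst recover ..
  finally have 1: "u = u'" .
  have "v = map the (filter (\<lambda>x. x \<noteq> None) (map snd (padL u v)))" unfolding padL_snd recover ..
  also have "\<dots> = v'" unfolding e padL_snd recover ..
  finally show ?thesis using 1 by simp
qed

lemma padL_split:
  assumes "length v \<le> length u"
  shows "padL u v = map (\<lambda>x. (Some x, None)) (take (length u - length v) u)
     @ zip (map Some (drop (length u - length v) u)) (map Some v)"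
proof -
  let ?c = "length u - length v"
  have m: "max (length u) (length v) = length u" using assms by simp
  have "padL u v = zip (map Some u) (replicate ?c None @ map Some v)"
    unfolding padL_def Let_def m by simp
  also have "map Some u = map Some (take ?c u) @ map Some (drop ?c u)"
    by (simp add: map_append[symmetric])
  also have "zip (map Some (take ?c u) @ map Some (drop ?c u)) (replicate ?c None @ map Some v)
      = zip (map Some (take ?c u)) (replicate ?c None) @ zip (map Some (drop ?c u)) (map Some v)"
    by (rule zip_append) simp
  also have "zip (map Some (take ?c u)) (replicate ?c None) = map (\<lambda>x. (Some x, None)) (take ?c u)"
    by (simp add: zip_replicate2 take_map comp_def)
  finally show ?thesis .
qed

lemma len_concat_le: "\<forall>x\<in>set xs. length (f x) \<le> D \<Longrightarrow> length (concat (map f xs)) \<le> D * length xs"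
  by (induct xs) auto

lemma bc_concat_zero: "\<forall>x\<in>set xs. False \<notin> set (f x) \<Longrightarrow> bc (concat (map f xs)) = 0"
  using bc_zero_iff by auto

lemma run_tail_bound:
  assumes y: "False \<in> set y" "length y \<le> D" and ws: "\<forall>x\<in>set ws. length (f x) \<le> D"
  shows "run acc (p @ y @ concat (map f ws)) \<le> D * Suc (length ws)"
proof -
  have "run acc (p @ y @ concat (map f ws)) = run (run (run acc p) y) (concat (map f ws))" by simp
  also have "\<dots> \<le> run (run acc p) y + length (concat (map f ws))" by (rule run_le)
  also have "\<dots> \<le> D + D * length ws"
    using run_le_F[OF y(1)] y(2) len_concat_le[OF ws] by (meson add_le_mono le_trans)
  finally show ?thesis by simp
qed


section \<open>Non-biautomaticity\<close>

lemma rep_h_split: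
  assumes "False \<in> set (y :: bool list)"
  obtains r z where "y = replicate r True @ False # z"
proof -
  obtain p z where pz: "y = p @ False # z" "False \<notin> set p" using split_list_first[OF assms] by blast
  have "p = replicate (length p) True"
    using pz(2) by (induct p) auto
  then show ?thesis using that pz(1) by metis
qed

lemma absorb:
  assumes "False \<in> set y"
  shows "(replicate (k * q) True @ y, y) \<in> PC k"
proof -
  obtain r z where y: "y = replicate r True @ False # z" using rep_h_split[OF assms] by blast
  have "(replicate (k * q + r) True @ [False], replicate r True @ [False]) \<in> PC k" by (rule pc_repl_mod)
  then have "([] @ (replicate (k * q + r) True @ [False]) @ z, [] @ (replicate r True @ [False]) @ z) \<in> PC k"
    by (rule pc_ctx)
  then show ?thesis unfolding y by (simp add: replicate_add)
qed

lemma per_j: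
  fixes L :: "bool list set list set" and A :: "bool list set set"
  assumes k: "k \<ge> 1"
    and Lw: "\<forall>w\<in>L. w \<noteq> [] \<and> set w \<subseteq> A"
    and AS: "A \<subseteq> sgp_carrier (rel_akb k)"
    and sur: "evalw (sgp_mult (rel_akb k)) ` L = sgp_carrier (rel_akb k)"
    and fin: "finite A"
    and h: "h \<in> A" "False \<in> set (rep h)"
    and j: "j \<ge> 1"
    and D: "D = (\<Sum>X\<in>A. length (rep X))"
  shows "\<exists>u v. u \<in> L \<and> v \<in> L \<and> sgp_mult (rel_akb k) (evalw (sgp_mult (rel_akb k)) u) h = evalw (sgp_mult (rel_akb k)) v
     \<and> length v < length u \<and> (\<forall>x\<in>set (drop (length u - length v) u). False \<notin> set (rep x))
     \<and> bc (concat (map rep (take (length u - length v) u))) = j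
     \<and> evalw (sgp_mult (rel_akb k)) v = cls k (replicate j False @ rep h)"
proof -
  let ?m = "sgp_mult (rel_akb k)"
  have hc: "h \<in> sgp_carrier (rel_akb k)" using h AS by blast
  have hr: "rep h \<noteq> []" "cls k (rep h) = h" using carrier_rep[OF hc] by auto
  have repD: "length (rep X) \<le> D" if "X \<in> A" for X
    unfolding D using member_le_sum[OF that, of "\<lambda>X. length (rep X)"] fin by simp
  define T where "T = cls k (replicate j False @ rep h)"
  have "T \<in> sgp_carrier (rel_akb k)" unfolding T_def carrier_cls using hr(1) by blast
  then obtain v where v: "v \<in> L" "evalw ?m v = T" using sur by (metis imageE)
  define n where "n = k * (D * (length v + 1) + 1)"
  define e where "e = replicate j False @ replicate n True"
  have ene: "e \<noteq> []" unfolding e_def using j by (cases j) auto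
  have "cls k e \<in> sgp_carrier (rel_akb k)" unfolding carrier_cls using ene by blast
  then obtain u where u: "u \<in> L" "evalw ?m u = cls k e" using sur by (metis imageE)
  have une: "u \<noteq> []" and uA: "set u \<subseteq> A" using Lw u(1) by auto
  have uC: "set u \<subseteq> sgp_carrier (rel_akb k)" using uA AS by blast
  define U where "U = concat (map rep u)"
  have evu: "evalw ?m u = cls k U" unfolding U_def by (rule evalw_carrier[OF une uC])
  have Une: "U \<noteq> []"
  proof -
    obtain x u' where "u = x # u'" using une by (cases u) auto
    moreover have "rep x \<noteq> []" using carrier_rep uC calculation by auto
    ultimately show ?thesis unfolding U_def by simp
  qed
  have Ue: "(U, e) \<in> PC k" using u(2) evu cls_eq_iff[OF Une, of k e] by simp
  have bcU: "bc U = j" using pc_inv[OF Ue] unfolding e_def by simp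
  have runU: "run 0 U = n" using pc_inv[OF Ue] unfolding e_def by simp
  have "(U @ rep h, e @ rep h) \<in> PC k" using pc_app[OF Ue pc_refl[OF hr(1)]] .
  moreover have "(e @ rep h, replicate j False @ rep h) \<in> PC k"
  proof -
    have "(replicate (k * (D * (length v + 1) + 1)) True @ rep h, rep h) \<in> PC k" by (rule absorb[OF h(2)])
    then have "(replicate j False @ (replicate n True @ rep h) @ [], replicate j False @ rep h @ []) \<in> PC k"
      unfolding n_def by (rule pc_ctx)
    then show ?thesis unfolding e_def by simp
  qed
  ultimately have "(U @ rep h, replicate j False @ rep h) \<in> PC k" by (rule pc_trans)
  then have "cls k (U @ rep h) = T" unfolding T_def using cls_eq_iff[of "U @ rep h" k] Une by simp
  moreover have "?m (evalw ?m u) h = cls k (U @ rep h)"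
    using evu mult_cls[OF Une hr(1), of k] hr(2) by simp
  ultimately have prod: "?m (evalw ?m u) h = evalw ?m v" using v(2) by simp
  define c where "c = length u - length v"
  have free: "\<forall>x\<in>set (drop c u). False \<notin> set (rep x)"
  proof (rule ballI, rule ccontr)
    fix x assume x: "x \<in> set (drop c u)" and "\<not> False \<notin> set (rep x)"
    then have xF: "False \<in> set (rep x)" by simp
    obtain d1 d2 where d: "drop c u = d1 @ x # d2" using split_list[OF x] by blast
    have ld: "length d2 < length v"
    proof -
      have "length (drop c u) \<le> length v" unfolding c_def by simp
      then show ?thesis using d by simp
    qed
    have xA: "x \<in> A" using x uA by (meson in_set_dropD subsetD)
    have d2A: "\<forall>y\<in>set d2. length (rep y) \<le> D"
    proof
      fix y assume "y \<in> set d2"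
      then have "y \<in> set (drop c u)" using d by simp
      then have "y \<in> A" using uA by (meson in_set_dropD subsetD)
      then show "length (rep y) \<le> D" by (rule repD)
    qed
    have ueq: "u = (take c u @ d1) @ [x] @ d2" using d by (metis append.assoc append_Cons append_Nil append_take_drop_id)
    have "U = concat (map rep (take c u @ d1)) @ rep x @ concat (map rep d2)"
      unfolding U_def by (subst ueq) simp
    then have "run 0 U \<le> D * Suc (length d2)"
      using run_tail_bound[OF xF repD[OF xA] d2A, of 0 "concat (map rep (take c u @ d1))"] by simp
    also have "\<dots> \<le> D * length v" using ld by (intro mult_le_mono2) simp
    also have "\<dots> < n"
    proof -
      have "D * length v < D * (length v + 1) + 1" by simp
      also have "\<dots> \<le> k * (D * (length v + 1) + 1)"
        using mult_le_mono1[OF k, of "D * (length v + 1) + 1"] by (simp only: mult_1)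
      finally show ?thesis unfolding n_def .
    qed
    finally show False using runU by simp
  qed
  have lt: "length v < length u"
  proof (rule ccontr)
    assume "\<not> length v < length u"
    then have "c = 0" unfolding c_def by simp
    then have "bc U = 0" using free bc_concat_zero[of u rep] unfolding U_def by simp
    then show False using bcU j by simp
  qed
  have "bc U = bc (concat (map rep (take c u))) + bc (concat (map rep (drop c u)))"
    unfolding U_def by (metis append_take_drop_id bc_append concat_append map_append)
  then have bcT: "bc (concat (map rep (take c u))) = j"
    using bc_concat_zero[OF free] bcU by simp
  show ?thesis
    using u(1) v(1) prod lt free bcT v(2) unfolding c_def T_def
    by (intro exI[of _ u] exI[of _ v] conjI) simp_all
qed


lemma negative:
  assumes k: "k \<ge> 1"
  shows "\<not> biautomatic (sgp_carrier (rel_akb k)) (sgp_mult (rel_akb k))"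
proof
  let ?m = "sgp_mult (rel_akb k)"
  let ?S = "sgp_carrier (rel_akb k)"
  assume "biautomatic ?S ?m"
  then obtain A L where gl: "gen_lang ?S ?m A L" and reg: "\<forall>a\<in>insert None (Some ` A).
        regular (LR ?m L a) \<and> regular (LL ?m L a) \<and> regular (RR ?m L a) \<and> regular (RL ?m L a)"
    unfolding biautomatic_def by blast
  have fin: "finite A" and AS: "A \<subseteq> ?S" and Lw: "\<forall>w\<in>L. w \<noteq> [] \<and> set w \<subseteq> A"
    and sur: "evalw ?m ` L = ?S" using gl unfolding gen_lang_def by auto
  obtain h where h: "h \<in> A" "False \<in> set (rep h)"
  proof -
    have "cls k [False] \<in> ?S" unfolding carrier_cls by blast
    then obtain w where w: "w \<in> L" "evalw ?m w = cls k [False]" using sur by (metis imageE)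
    have wne: "w \<noteq> []" and wA: "set w \<subseteq> A" using Lw w(1) by auto
    have wC: "set w \<subseteq> ?S" using wA AS by blast
    have ev: "evalw ?m w = cls k (concat (map rep w))" by (rule evalw_carrier[OF wne wC])
    have "cls k [False] = cls k (concat (map rep w))" using w(2) ev by simp
    then have "([False], concat (map rep w)) \<in> PC k" using cls_eq_iff[of "[False]" k "concat (map rep w)"] by simp
    then have "bc (concat (map rep w)) = 1" using pc_inv by fastforce
    then have "bc (concat (map rep w)) \<noteq> 0" by simp
    then have "False \<in> set (concat (map rep w))" unfolding bc_zero_iff by simp
    then obtain x where "x \<in> set w" "False \<in> set (rep x)" by auto
    then show ?thesis using that wA by blast
  qed
  have "regular (LL ?m L (Some h))" using reg h(1) by blast
  then obtain N and \<delta> :: "nat \<Rightarrow> bool list set option \<times> bool list set option \<Rightarrow> nat" and q0 F where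
    N: "q0 < N" "\<forall>q<N. \<forall>c. \<delta> q c < N" and LLe: "LL ?m L (Some h) = {w. foldl \<delta> q0 w \<in> F}"
    by (rule regularE)
  define D where "D = (\<Sum>X\<in>A. length (rep X))"
  define P where "P j u v \<longleftrightarrow> u \<in> L \<and> v \<in> L \<and> ?m (evalw ?m u) h = evalw ?m v
     \<and> length v < length u \<and> (\<forall>x\<in>set (drop (length u - length v) u). False \<notin> set (rep x))
     \<and> bc (concat (map rep (take (length u - length v) u))) = j
     \<and> evalw ?m v = cls k (replicate j False @ rep h)" for j u v
  have ex: "\<exists>uv. P j (fst uv) (snd uv)" if "j \<ge> 1" for j
    using per_j[OF k Lw AS sur fin h that D_def] unfolding P_def by auto
  define UV where "UV j = (SOME uv. P j (fst uv) (snd uv))" for j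
  have PUV: "P j (fst (UV j)) (snd (UV j))" if "j \<ge> 1" for j
    unfolding UV_def using someI_ex[OF ex[OF that]] .
  define cut where "cut j = length (fst (UV j)) - length (snd (UV j))" for j
  define st where "st j = foldl \<delta> q0 (map (\<lambda>x. (Some x, None)) (take (cut j) (fst (UV j))))" for j
  have stN: "st j < N" for j unfolding st_def by (rule foldl_bound[OF N(2) N(1)])
  have "\<not> inj_on st {1..Suc N}"
  proof
    assume "inj_on st {1..Suc N}"
    moreover have "st ` {1..Suc N} \<subseteq> {..<N}" using stN by auto
    ultimately have "card {1..Suc N} \<le> card {..<N}" by (rule card_inj_on_le) simp
    then show False by simp
  qed
  then obtain j1 j2 where jj: "j1 \<in> {1..Suc N}" "j2 \<in> {1..Suc N}" "j1 \<noteq> j2" "st j1 = st j2"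
    unfolding inj_on_def by blast
  define u1 where "u1 = fst (UV j1)"
  define v1 where "v1 = snd (UV j1)"
  define u2 where "u2 = fst (UV j2)"
  define v2 where "v2 = snd (UV j2)"
  have P1: "P j1 u1 v1" unfolding u1_def v1_def using PUV jj(1) by simp
  have P2: "P j2 u2 v2" unfolding u2_def v2_def using PUV jj(2) by simp
  define c1 where "c1 = length u1 - length v1"
  define c2 where "c2 = length u2 - length v2"
  have c1e: "cut j1 = c1" unfolding cut_def c1_def u1_def v1_def ..
  have c2e: "cut j2 = c2" unfolding cut_def c2_def u2_def v2_def ..
  have lt1: "length v1 < length u1" and lt2: "length v2 < length u2" using P1 P2 unfolding P_def by auto
  define u' where "u' = take c1 u1 @ drop c2 u2"
  have ltc1: "length (take c1 u1) = c1" unfolding c1_def using lt1 by simp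
  have ld2: "length (drop c2 u2) = length v2" unfolding c2_def using lt2 by simp
  have lu': "length u' = c1 + length v2" unfolding u'_def using ltc1 ld2 by simp
  have pu': "padL u' v2 = map (\<lambda>x. (Some x, None)) (take c1 u1) @ zip (map Some (drop c2 u2)) (map Some v2)"
  proof -
    have "padL u' v2 = map (\<lambda>x. (Some x, None)) (take (length u' - length v2) u')
       @ zip (map Some (drop (length u' - length v2) u')) (map Some v2)"
      by (rule padL_split) (simp add: lu')
    moreover have "length u' - length v2 = c1" using lu' by simp
    moreover have "take c1 u' = take c1 u1" unfolding u'_def using ltc1 by simp
    moreover have "drop c1 u' = drop c2 u2" unfolding u'_def using ltc1 by simp
    ultimately show ?thesis by simp
  qed
  have pu2: "padL u2 v2 = map (\<lambda>x. (Some x, None)) (take c2 u2) @ zip (map Some (drop c2 u2)) (map Some v2)"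
    unfolding c2_def using lt2 by (intro padL_split) simp
  have "padL u2 v2 \<in> LL ?m L (Some h)"
    unfolding LL_def rmul_def using P2 unfolding P_def
    by (intro CollectI exI[of _ u2] exI[of _ v2] conjI) simp_all
  then have acc2: "foldl \<delta> q0 (padL u2 v2) \<in> F" using LLe by simp
  have "st j1 = foldl \<delta> q0 (map (\<lambda>x. (Some x, None)) (take c1 u1))" unfolding st_def c1e u1_def ..
  moreover have "st j2 = foldl \<delta> q0 (map (\<lambda>x. (Some x, None)) (take c2 u2))" unfolding st_def c2e u2_def ..
  ultimately have "foldl \<delta> q0 (padL u' v2) = foldl \<delta> q0 (padL u2 v2)"
    unfolding pu' pu2 foldl_append using jj(4) by simp
  then have "padL u' v2 \<in> LL ?m L (Some h)" using acc2 LLe by simp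
  then obtain a b where ab: "padL u' v2 = padL a b" "a \<in> L" "b \<in> L"
    "rmul ?m (evalw ?m a) (Some h) = evalw ?m b" unfolding LL_def by blast
  have "a = u'" "b = v2" using padL_inj[OF ab(1)] by auto
  then have u'L: "u' \<in> L" and prod: "?m (evalw ?m u') h = evalw ?m v2" using ab unfolding rmul_def by auto
  have une: "u' \<noteq> []" and uA: "set u' \<subseteq> A" using Lw u'L by auto
  have uC: "set u' \<subseteq> ?S" using uA AS by blast
  define U where "U = concat (map rep u')"
  have evu: "evalw ?m u' = cls k U" unfolding U_def by (rule evalw_carrier[OF une uC])
  have Une: "U \<noteq> []"
  proof -
    obtain x w where "u' = x # w" using une by (cases u') auto
    moreover have "rep x \<noteq> []" using carrier_rep uC calculation by auto
    ultimately show ?thesis unfolding U_def by simp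
  qed
  have hc: "h \<in> ?S" using h(1) AS by blast
  have hr: "rep h \<noteq> []" "cls k (rep h) = h" using carrier_rep[OF hc] by auto
  have "?m (evalw ?m u') h = cls k (U @ rep h)"
    using evu mult_cls[OF Une hr(1), of k] hr(2) by simp
  then have "cls k (U @ rep h) = cls k (replicate j2 False @ rep h)" using prod P2 unfolding P_def by simp
  then have "(U @ rep h, replicate j2 False @ rep h) \<in> PC k" using cls_eq_iff[of "U @ rep h" k] Une by simp
  then have bcU: "bc U = j2" using pc_inv by fastforce
  have free2: "\<forall>x\<in>set (drop c2 u2). False \<notin> set (rep x)" using P2 unfolding P_def c2_def by blast
  have "bc U = bc (concat (map rep (take c1 u1))) + bc (concat (map rep (drop c2 u2)))"
    unfolding U_def u'_def by simp
  also have "\<dots> = j1" using P1 bc_concat_zero[OF free2] unfolding P_def c1_def by simp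
  finally show False using bcU jj(3) by simp
qed

theorem theorem3p1p8:
  fixes k :: nat
  assumes "k \<ge> 1"
  shows "prefix_automatic (sgp_carrier (rel_akb k)) (sgp_mult (rel_akb k))
       \<and> \<not> biautomatic (sgp_carrier (rel_akb k)) (sgp_mult (rel_akb k))"
  using positive[OF assms] negative[OF assms] by simp

end
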